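(* Let $X\in\mathbb{R}^d$ be a random vector with mean $\theta_0$ and covariance matrix $\Sigma_0$, and assume (A1): $\Sigma_0$ is a finite covariance matrix of full rank $d$. Let $X_1,\dots,X_n$ ($n>d$) be independent copies of $X$, $\Theta_n$ the interior of their convex hull, $\tilde\theta$ the sample mean and $l(\theta)$ the empirical log-likelihood ratio for the mean. Let $h_n^C:\Theta_n\to\mathbb{R}^d$ be the composite similarity mapping $h_n^C(\theta)=\tilde\theta+\bigl(1+\frac{l(\theta)}{2n}\bigr)(\theta-\tilde\theta)$, which is a bijection onto $\mathbb{R}^d$, and let $h_n^{-C}:\mathbb{R}^d\to\Theta_n$ denote its inverse. Set $\theta_0'=h_n^{-C}(\theta_0)$. Then (i) $\theta_0'$ lies on the line segment $[\tilde\theta,\theta_0]$ joining $\tilde\theta$ and $\theta_0$; and (ii) $\theta_0'-\theta_0=O_p(n^{-3/2})$ as $n\to\infty$.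
   Context: For $\theta\in\mathbb{R}^d$, the empirical likelihood ratio is $R(\theta)=\sup\{\prod_{i=1}^n nw_i : \sum_{i=1}^n w_i(X_i-\theta)=0,\ w_i\ge 0,\ \sum_{i=1}^n w_i=1\}$, and $l(\theta)=-2\log R(\theta)$; $l$ is finite exactly on $\Theta_n$ and $l(\tilde\theta)=0$. Standing convention: whenever (A1) is assumed, the convex hull of $X_1,\dots,X_n$ is understood to be nondegenerate (this holds with probability one). *)

theory Defs
  imports "HOL-Analysis.Analysis" "HOL-Probability.Probability"
begin

text \<open>Sample points are given as a family x :: nat => real^'d, the sample of size n
being x 0, ..., x (n-1).\<close>

definition smean :: "(nat \<Rightarrow> real^'d) \<Rightarrow> nat \<Rightarrow> real^'d" where
  "smean x n = (1 / real n) *\<^sub>R (\<Sum>i<n. x i)"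

definition Theta_n :: "(nat \<Rightarrow> real^'d) \<Rightarrow> nat \<Rightarrow> (real^'d) set" where
  "Theta_n x n = interior (convex hull (x ` {..<n}))"

definition ELR :: "(nat \<Rightarrow> real^'d) \<Rightarrow> nat \<Rightarrow> real^'d \<Rightarrow> real" where
  "ELR x n \<theta> = Sup {(\<Prod>i<n. real n * w i) | w :: nat \<Rightarrow> real.
      (\<forall>i<n. w i \<ge> 0) \<and> (\<Sum>i<n. w i) = 1 \<and> (\<Sum>i<n. w i *\<^sub>R (x i - \<theta>)) = 0}"

text \<open>Empirical log-likelihood ratio l(theta) = -2 log R(theta) (used only on Theta_n).\<close>
definition ELL :: "(nat \<Rightarrow> real^'d) \<Rightarrow> nat \<Rightarrow> real^'d \<Rightarrow> real" where
  "ELL x n \<theta> = - 2 * ln (ELR x n \<theta>)"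

definition hC :: "(nat \<Rightarrow> real^'d) \<Rightarrow> nat \<Rightarrow> real^'d \<Rightarrow> real^'d" where
  "hC x n \<theta> = smean x n + (1 + ELL x n \<theta> / (2 * real n)) *\<^sub>R (\<theta> - smean x n)"

definition hC_inv :: "(nat \<Rightarrow> real^'d) \<Rightarrow> nat \<Rightarrow> real^'d \<Rightarrow> real^'d" where
  "hC_inv x n y = (THE \<theta>. \<theta> \<in> Theta_n x n \<and> hC x n \<theta> = y)"

end

theory Submission
  imports Defs
begin


definition feas :: "(nat \<Rightarrow> real^'d) \<Rightarrow> nat \<Rightarrow> real^'d \<Rightarrow> (nat \<Rightarrow> real) \<Rightarrow> bool" where
  "feas x n \<theta> w \<longleftrightarrow> (\<forall>i<n. 0 \<le> w i) \<and> sum w {..<n} = 1 \<and> (\<Sum>i<n. w i *\<^sub>R x i) = \<theta>"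

definition PW :: "nat \<Rightarrow> (nat \<Rightarrow> real) \<Rightarrow> real" where
  "PW n w = (\<Prod>i<n. real n * w i)"

lemma ELR_eq: "ELR x n \<theta> = Sup (PW n ` {w. feas x n \<theta> w})"
proof -
  have "{(\<Prod>i<n. real n * w i) | w :: nat \<Rightarrow> real.
      (\<forall>i<n. w i \<ge> 0) \<and> (\<Sum>i<n. w i) = 1 \<and> (\<Sum>i<n. w i *\<^sub>R (x i - \<theta>)) = 0}
      = PW n ` {w. feas x n \<theta> w}"
  proof -
    have eq: "(\<Sum>i<n. w i *\<^sub>R (x i - \<theta>)) = (\<Sum>i<n. w i *\<^sub>R x i) - (\<Sum>i<n. w i) *\<^sub>R \<theta>" for w
      by (simp add: scaleR_diff_right sum_subtractf scaleR_sum_left)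
    show ?thesis unfolding feas_def PW_def image_def using eq by (auto simp: eq)
  qed
  then show ?thesis unfolding ELR_def by simp
qed

lemma feas_le1: "feas x n \<theta> w \<Longrightarrow> i < n \<Longrightarrow> w i \<le> 1"
proof -
  assume f: "feas x n \<theta> w" and i: "i < n"
  have "w i \<le> sum w {..<n}"
    by (rule member_le_sum) (use f i in \<open>auto simp: feas_def\<close>)
  then show "w i \<le> 1" using f by (simp add: feas_def)
qed

lemma PW_nonneg: "feas x n \<theta> w \<Longrightarrow> 0 \<le> PW n w"
  unfolding feas_def PW_def by (auto intro!: prod_nonneg)

lemma PW_le1: assumes "feas x n \<theta> w" shows "PW n w \<le> 1"
proof (cases "\<exists>i<n. w i = 0")
  case True
  then obtain i where "i<n" "w i = 0" by auto
  then have "PW n w = 0" unfolding PW_def by (auto intro!: prod_zero)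
  then show ?thesis by simp
next
  case False
  have pos: "0 < real n * w i" if "i<n" for i
  proof -
    have "0 \<le> w i" "w i \<noteq> 0" using assms that False unfolding feas_def by auto
    moreover have "0 < real n" using that by simp
    ultimately show ?thesis by simp
  qed
  have "ln (PW n w) = (\<Sum>i<n. ln (real n * w i))"
    unfolding PW_def using pos by (subst ln_prod) (auto, metis less_irrefl mult_zero_right)
  also have "\<dots> \<le> (\<Sum>i<n. real n * w i - 1)"
    by (intro sum_mono ln_le_minus_one) (simp add: pos)
  also have "\<dots> = real n * sum w {..<n} - real n"
    by (simp add: sum_subtractf sum_distrib_left)
  also have "\<dots> = 0" using assms unfolding feas_def by simp
  finally have "ln (PW n w) \<le> 0" .
  moreover have "0 < PW n w" unfolding PW_def by (rule prod_pos) (simp add: pos)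
  ultimately show ?thesis by simp
qed

lemma feas_mix:
  assumes "feas x n a v" "feas x n b w" "0 \<le> t" "t \<le> 1"
  shows "feas x n ((1-t) *\<^sub>R a + t *\<^sub>R b) (\<lambda>i. (1-t) * v i + t * w i)"
proof -
  have "(\<Sum>i<n. ((1-t) * v i + t * w i) *\<^sub>R x i)
      = (1-t) *\<^sub>R (\<Sum>i<n. v i *\<^sub>R x i) + t *\<^sub>R (\<Sum>i<n. w i *\<^sub>R x i)"
    by (simp add: sum.distrib scaleR_add_left scaleR_sum_right)
  moreover have "(\<Sum>i<n. (1-t) * v i + t * w i) = (1-t) * sum v {..<n} + t * sum w {..<n}"
    by (simp add: sum.distrib sum_distrib_left)
  ultimately show ?thesis using assms unfolding feas_def by auto
qed

lemma feas_point: assumes "j < n" shows "feas x n (x j) (\<lambda>i. if i = j then 1 else 0)"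
proof -
  have "(\<Sum>i<n. (if i = j then 1 else 0) *\<^sub>R x i) = (\<Sum>i<n. if i = j then x j else 0)"
    by (rule sum.cong) auto
  also have "\<dots> = x j" using assms by simp
  finally show ?thesis using assms unfolding feas_def by simp
qed

lemma hull_feas:
  assumes "\<theta> \<in> convex hull (x ` {..<n})"
  shows "\<exists>w. feas x n \<theta> w"
proof -
  have "convex {\<theta>. \<exists>w. feas x n \<theta> w}"
    unfolding convex_alt
  proof (clarify)
    fix a b v w and t :: real assume "feas x n a v" "feas x n b w" "0 \<le> t" "t \<le> 1"
    then show "\<exists>w'. feas x n ((1-t) *\<^sub>R a + t *\<^sub>R b) w'" using feas_mix by blast
  qed
  moreover have "x ` {..<n} \<subseteq> {\<theta>. \<exists>w. feas x n \<theta> w}"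
    using feas_point by blast
  ultimately have "convex hull (x ` {..<n}) \<subseteq> {\<theta>. \<exists>w. feas x n \<theta> w}"
    using hull_minimal by blast
  then show ?thesis using assms by blast
qed

lemma ELR_ge:
  assumes "feas x n \<theta> w" shows "PW n w \<le> ELR x n \<theta>"
  unfolding ELR_eq
  by (rule cSup_upper) (use assms PW_le1 in \<open>auto intro!: bdd_aboveI[where M=1]\<close>)

lemma ELR_le1:
  assumes "\<theta> \<in> convex hull (x ` {..<n})" shows "ELR x n \<theta> \<le> 1"
  unfolding ELR_eq using hull_feas[OF assms] PW_le1
  by (intro cSup_least) auto

lemma ELR_le:
  assumes "\<theta> \<in> convex hull (x ` {..<n})" "\<And>w. feas x n \<theta> w \<Longrightarrow> PW n w \<le> C"
  shows "ELR x n \<theta> \<le> C"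
  unfolding ELR_eq using hull_feas[OF assms(1)] assms(2)
  by (intro cSup_least) auto

lemma feas_hull: assumes "feas x n \<theta> w" shows "\<theta> \<in> convex hull (x ` {..<n})"
proof -
  have "(\<Sum>i<n. w i *\<^sub>R x i) \<in> convex hull (x ` {..<n})"
    by (rule convex_sum) (use assms in \<open>auto simp: feas_def intro: hull_inc\<close>)
  then show ?thesis using assms by (simp add: feas_def)
qed

lemma smean_feas: assumes "0 < n" shows "feas x n (smean x n) (\<lambda>_. 1 / real n)"
  using assms unfolding feas_def smean_def by (simp add: scaleR_sum_right)

lemma PW_unif: assumes "0 < n" shows "PW n (\<lambda>_. 1 / real n) = 1"
  using assms unfolding PW_def by simp

lemma ELR_smean: assumes "0 < n" shows "ELR x n (smean x n) = 1"
proof (rule antisym)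
  show "ELR x n (smean x n) \<le> 1"
    by (rule ELR_le1) (rule feas_hull[OF smean_feas[OF assms]])
  show "1 \<le> ELR x n (smean x n)"
    using ELR_ge[OF smean_feas[OF assms]] PW_unif[OF assms] by simp
qed

lemma PW_pos: assumes "feas x n \<theta> w" "\<And>i. i < n \<Longrightarrow> 0 < w i" shows "0 < PW n w"
  unfolding PW_def
proof (rule prod_pos)
  fix i assume "i \<in> {..<n}"
  then have i: "i < n" by simp
  then have "0 < real n" by simp
  then show "0 < real n * w i" using assms(2)[OF i] by (rule mult_pos_pos)
qed

lemma PW_pos_D: assumes "feas x n \<theta> w" "0 < PW n w" "i < n" shows "0 < real n * w i"
proof -
  have "real n * w i \<noteq> 0"
  proof
    assume a: "real n * w i = 0"
    have "PW n w = 0" unfolding PW_def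
      by (rule prod_zero) (use a assms(3) in auto)
    then show False using assms(2) by simp
  qed
  moreover have "0 \<le> real n * w i" using assms unfolding feas_def by auto
  ultimately show ?thesis by linarith
qed

lemma smean_interior:
  assumes n: "0 < n" and ne: "interior (convex hull (x ` {..<n})) \<noteq> {}"
  shows "smean x n \<in> interior (convex hull (x ` {..<n}))"
proof -
  define H where "H = convex hull (x ` {..<n})"
  obtain q where q: "q \<in> interior H" using ne H_def by auto
  then have "q \<in> H" using interior_subset by auto
  then obtain v where v: "feas x n q v" using hull_feas H_def by blast
  define \<rho> :: real where "\<rho> = 1 / (real n + 1)"
  have \<rho>: "0 < \<rho>" "\<rho> < 1" "\<rho> \<le> 1 / real n" using n unfolding \<rho>_def by (auto simp: field_simps)
  define c1 where "c1 = 1 / (real n * (1 - \<rho>))"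
  define c2 where "c2 = \<rho> / (1 - \<rho>)"
  define w where "w i = c1 - c2 * v i" for i
  define p where "p = c1 *\<^sub>R (\<Sum>i<n. x i) - c2 *\<^sub>R q"
  have "feas x n p w"
  proof -
    have w0: "0 \<le> w i" if "i < n" for i
    proof -
      have "v i \<le> 1" using feas_le1[OF v that] .
      moreover have "0 \<le> v i" using v that by (auto simp: feas_def)
      ultimately have "\<rho> * v i \<le> 1 / real n" using \<rho> mult_left_le[of "v i" \<rho>] by linarith
      then have "\<rho> * v i / (1 - \<rho>) \<le> (1 / real n) / (1 - \<rho>)"
        using \<rho> by (intro divide_right_mono) auto
      then show ?thesis unfolding w_def c1_def c2_def by simp
    qed
    have "sum w {..<n} = real n * c1 - c2 * sum v {..<n}"
      unfolding w_def by (simp add: sum_subtractf sum_distrib_left)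
    also have "\<dots> = real n * c1 - c2" using v by (simp add: feas_def)
    also have "\<dots> = 1" unfolding c1_def c2_def using n \<rho> by (simp add: field_simps)
    finally have ws: "sum w {..<n} = 1" .
    have "(\<Sum>i<n. w i *\<^sub>R x i) = c1 *\<^sub>R (\<Sum>i<n. x i) - c2 *\<^sub>R (\<Sum>i<n. v i *\<^sub>R x i)"
      unfolding w_def by (simp add: scaleR_diff_left sum_subtractf scaleR_sum_right)
    also have "\<dots> = p" using v unfolding p_def feas_def by simp
    finally show ?thesis using w0 ws unfolding feas_def by simp
  qed
  then have pH: "p \<in> H" using feas_hull H_def by blast
  have sp: "smean x n = (1 - \<rho>) *\<^sub>R p + \<rho> *\<^sub>R q"
  proof -
    have "(1 - \<rho>) *\<^sub>R p + \<rho> *\<^sub>R q = ((1 - \<rho>) * c1) *\<^sub>R (\<Sum>i<n. x i) + (\<rho> - (1 - \<rho>) * c2) *\<^sub>R q"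
      unfolding p_def by (simp add: algebra_simps)
    also have "(1 - \<rho>) * c1 = 1 / real n" unfolding c1_def using \<rho> by simp
    also have "\<rho> - (1 - \<rho>) * c2 = 0" unfolding c2_def using \<rho> by simp
    finally show ?thesis unfolding smean_def by simp
  qed
  show ?thesis
  proof (cases "p = q")
    case True
    then have "smean x n = q" using sp by (simp add: algebra_simps)
    then show ?thesis using q H_def by simp
  next
    case False
    have "smean x n \<in> open_segment q p"
      unfolding in_segment using False \<rho> sp by (intro conjI exI[of _ "1 - \<rho>"]) (auto simp: algebra_simps)
    moreover have "open_segment q p \<subseteq> interior H"
      by (rule in_interior_closure_convex_segment) (use q pH closure_subset H_def in auto)
    ultimately show ?thesis using H_def by auto
  qed
qed



lemma interior_pos_feas:
  assumes n: "0 < n" and th: "\<theta> \<in> interior (convex hull (x ` {..<n}))"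
  shows "\<exists>w. feas x n \<theta> w \<and> (\<forall>i<n. 0 < w i)"
proof -
  define H where "H = convex hull (x ` {..<n})"
  define s where "s = smean x n"
  obtain e where e: "0 < e" "ball \<theta> e \<subseteq> H" using th H_def by (meson interior_subset openE open_interior subset_trans)
  define \<delta> where "\<delta> = e / (2 * (norm (\<theta> - s) + 1))"
  have "0 < 2 * (norm (\<theta> - s) + 1)" by (smt (verit) norm_ge_zero)
  then have \<delta>: "0 < \<delta>" unfolding \<delta>_def using e by (intro divide_pos_pos)
  define p where "p = \<theta> + \<delta> *\<^sub>R (\<theta> - s)"
  have "dist \<theta> p = \<delta> * norm (\<theta> - s)" unfolding p_def dist_norm using \<delta> by simp
  also have "\<dots> < e"
  proof -
    have "\<delta> * norm (\<theta> - s) = e * (norm (\<theta> - s) / (2 * (norm (\<theta> - s) + 1)))"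
      unfolding \<delta>_def by simp
    also have "norm (\<theta> - s) / (2 * (norm (\<theta> - s) + 1)) < 1"
      by (simp add: field_simps add_pos_nonneg)
    then have "e * (norm (\<theta> - s) / (2 * (norm (\<theta> - s) + 1))) < e * 1"
      using e(1) by (intro mult_strict_left_mono) auto
    finally show ?thesis by simp
  qed
  finally have "p \<in> H" using e by auto
  then obtain v where v: "feas x n p v" using hull_feas H_def by blast
  define t where "t = \<delta> / (1 + \<delta>)"
  have t: "0 < t" "t < 1" unfolding t_def using \<delta> by auto
  have "feas x n ((1 - t) *\<^sub>R p + t *\<^sub>R s) (\<lambda>i. (1 - t) * v i + t * (1 / real n))"
    using feas_mix[OF v smean_feas[OF n], of t] t s_def by simp
  moreover have "(1 - t) *\<^sub>R p + t *\<^sub>R s = \<theta>"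
  proof -
    have "1 - t = 1 / (1 + \<delta>)" unfolding t_def using \<delta> by (simp add: field_simps)
    then have "(1 - t) *\<^sub>R p + t *\<^sub>R s = (1 / (1 + \<delta>)) *\<^sub>R (p + \<delta> *\<^sub>R s)"
      unfolding t_def by (simp add: scaleR_add_right divide_inverse)
    also have "p + \<delta> *\<^sub>R s = (1 + \<delta>) *\<^sub>R \<theta>" unfolding p_def by (simp add: algebra_simps)
    finally show ?thesis using \<delta> by simp
  qed
  moreover have "\<forall>i<n. 0 < (1 - t) * v i + t * (1 / real n)"
  proof (intro allI impI)
    fix i assume "i < n"
    then have "0 \<le> v i" using v by (auto simp: feas_def)
    then have "0 \<le> (1 - t) * v i" using t by simp
    moreover have "0 < t * (1 / real n)" using t n by simp
    ultimately show "0 < (1 - t) * v i + t * (1 / real n)" by linarith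
  qed
  ultimately show ?thesis by metis
qed

lemma ELR_pos:
  assumes n: "0 < n" and th: "\<theta> \<in> interior (convex hull (x ` {..<n}))"
  shows "0 < ELR x n \<theta>"
proof -
  obtain w where w: "feas x n \<theta> w" "\<forall>i<n. 0 < w i" using interior_pos_feas[OF assms] by blast
  have "0 < PW n w" using PW_pos[OF w(1)] w(2) by blast
  also have "\<dots> \<le> ELR x n \<theta>" by (rule ELR_ge[OF w(1)])
  finally show ?thesis .
qed

lemma sup_ln_le:
  fixes S :: "real set"
  assumes ne: "S \<noteq> {}" and nn: "\<And>P. P \<in> S \<Longrightarrow> 0 \<le> P" and bd: "bdd_above S"
    and pos: "0 < Sup S" and c: "0 \<le> c"
    and H: "\<And>P. P \<in> S \<Longrightarrow> 0 < P \<Longrightarrow> c * ln P \<le> C"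
  shows "c * ln (Sup S) \<le> C"
proof (cases "c = 0")
  case True
  obtain P where P: "P \<in> S" "0 < P" using pos ne bd by (meson less_cSup_iff)
  show ?thesis using H[OF P] True by simp
next
  case False
  then have c': "0 < c" using c by simp
  have "P \<le> exp (C / c)" if "P \<in> S" for P
  proof (cases "P = 0")
    case True then show ?thesis by simp
  next
    case False
    then have P: "0 < P" using nn[OF that] by simp
    have "ln P \<le> C / c" using H[OF that P] c' by (simp add: field_simps mult.commute)
    then show ?thesis using P by (metis exp_le_cancel_iff exp_ln)
  qed
  then have "Sup S \<le> exp (C / c)" using ne by (intro cSup_least) auto
  then have "ln (Sup S) \<le> C / c" using pos by (metis ln_exp ln_le_cancel_iff exp_gt_zero)
  then show ?thesis using c' by (simp add: field_simps mult.commute)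
qed

lemma ln_PW_mix:
  assumes v: "feas x n a v" "0 < PW n v" and w: "feas x n b w" "0 < PW n w"
    and t: "0 \<le> t" "t \<le> 1"
  shows "(1 - t) * ln (PW n v) + t * ln (PW n w) \<le> ln (PW n (\<lambda>i. (1-t) * v i + t * w i))"
proof -
  have pv: "0 < real n * v i" if "i < n" for i using PW_pos_D[OF v that] .
  have pw: "0 < real n * w i" if "i < n" for i using PW_pos_D[OF w that] .
  have lnv: "ln (PW n v) = (\<Sum>i<n. ln (real n * v i))"
    unfolding PW_def by (rule ln_prod) (use pv in \<open>auto simp del: of_nat_0_less_iff, metis less_irrefl mult_zero_right\<close>)
  have lnw: "ln (PW n w) = (\<Sum>i<n. ln (real n * w i))"
    unfolding PW_def by (rule ln_prod) (use pw in \<open>auto simp del: of_nat_0_less_iff, metis less_irrefl mult_zero_right\<close>)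
  have pm: "0 < real n * ((1-t) * v i + t * w i)" if "i < n" for i
  proof -
    have "real n * ((1-t) * v i + t * w i) = (1 - t) * (real n * v i) + t * (real n * w i)"
      by (simp add: algebra_simps)
    moreover have "0 \<le> (1 - t) * (real n * v i)" using pv[OF that] t by simp
    moreover have "0 \<le> t * (real n * w i)" using pw[OF that] t by simp
    moreover have "(1 - t) * (real n * v i) + t * (real n * w i) \<noteq> 0"
    proof
      assume "(1 - t) * (real n * v i) + t * (real n * w i) = 0"
      then have "(1 - t) * (real n * v i) = 0" "t * (real n * w i) = 0"
        using \<open>0 \<le> (1 - t) * (real n * v i)\<close> \<open>0 \<le> t * (real n * w i)\<close> by linarith+
      then show False using pv[OF that] pw[OF that] by auto
    qed
    ultimately show ?thesis by linarith
  qed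
  have lnm: "ln (PW n (\<lambda>i. (1-t) * v i + t * w i)) = (\<Sum>i<n. ln (real n * ((1-t) * v i + t * w i)))"
    unfolding PW_def by (rule ln_prod) (use pm in \<open>auto simp del: of_nat_0_less_iff, metis less_irrefl mult_zero_right\<close>)
  have "(1 - t) * ln (PW n v) + t * ln (PW n w) = (\<Sum>i<n. (1 - t) * ln (real n * v i) + t * ln (real n * w i))"
    unfolding lnv lnw by (simp add: sum.distrib sum_distrib_left)
  also have "\<dots> \<le> (\<Sum>i<n. ln (real n * ((1-t) * v i + t * w i)))"
  proof (rule sum_mono)
    fix i assume "i \<in> {..<n}"
    then have i: "i < n" by simp
    have "(1 - t) * ln (real n * v i) + t * ln (real n * w i) \<le> ln ((1 - t) *\<^sub>R (real n * v i) + t *\<^sub>R (real n * w i))"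
      using concave_onD[OF ln_concave, of t "real n * v i" "real n * w i"] t pv[OF i] pw[OF i] by simp
    also have "(1 - t) *\<^sub>R (real n * v i) + t *\<^sub>R (real n * w i) = real n * ((1-t) * v i + t * w i)"
      by (simp add: algebra_simps)
    finally show "(1 - t) * ln (real n * v i) + t * ln (real n * w i) \<le> ln (real n * ((1-t) * v i + t * w i))" .
  qed
  finally show ?thesis unfolding lnm .
qed



lemma PW_mix_pos:
  assumes v: "feas x n a v" "0 < PW n v" and w: "feas x n b w" "0 < PW n w"
    and t: "0 \<le> t" "t \<le> 1"
  shows "0 < PW n (\<lambda>i. (1-t) * v i + t * w i)"
proof (rule PW_pos[OF feas_mix[OF v(1) w(1) t]])
  fix i assume i: "i < n"
  have "0 < real n * v i" using PW_pos_D[OF v i] .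
  then have vi: "0 < v i" using i by (simp add: zero_less_mult_iff)
  have "0 < real n * w i" using PW_pos_D[OF w i] .
  then have wi: "0 < w i" using i by (simp add: zero_less_mult_iff)
  show "0 < (1-t) * v i + t * w i"
  proof (cases "t = 1")
    case True then show ?thesis using wi by simp
  next
    case False
    then have "0 < (1 - t) * v i" using t vi by simp
    moreover have "0 \<le> t * w i" using t wi by simp
    ultimately show ?thesis by linarith
  qed
qed

lemma S_props:
  assumes n: "0 < n" and c: "c \<in> Theta_n x n"
  shows S_ne: "PW n ` {w. feas x n c w} \<noteq> {}"
    and S_nn: "\<And>P. P \<in> PW n ` {w. feas x n c w} \<Longrightarrow> 0 \<le> P"
    and S_bdd: "bdd_above (PW n ` {w. feas x n c w})"
    and S_pos: "0 < Sup (PW n ` {w. feas x n c w})"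
proof -
  have "c \<in> convex hull (x ` {..<n})" using c interior_subset unfolding Theta_n_def by blast
  then show "PW n ` {w. feas x n c w} \<noteq> {}" using hull_feas[of c x n] by auto
  show "\<And>P. P \<in> PW n ` {w. feas x n c w} \<Longrightarrow> 0 \<le> P" using PW_nonneg by blast
  show "bdd_above (PW n ` {w. feas x n c w})" using PW_le1 by (intro bdd_aboveI[where M=1]) blast
  show "0 < Sup (PW n ` {w. feas x n c w})" using ELR_pos[OF n, of c x] c unfolding ELR_eq Theta_n_def by simp
qed

lemma ELR_concave:
  assumes n: "0 < n" and a: "a \<in> Theta_n x n" and b: "b \<in> Theta_n x n" and t: "0 \<le> t" "t \<le> 1"
  shows "(1-t) * ln (ELR x n a) + t * ln (ELR x n b) \<le> ln (ELR x n ((1-t) *\<^sub>R a + t *\<^sub>R b))"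
proof -
  define m where "m = (1-t) *\<^sub>R a + t *\<^sub>R b"
  have cT: "convex (Theta_n x n)" unfolding Theta_n_def by (simp add: convex_interior)
  have mT: "m \<in> Theta_n x n" unfolding m_def using convexD_alt[OF cT a b t] by simp
  have HT: "Theta_n x n \<subseteq> convex hull (x ` {..<n})" unfolding Theta_n_def by (rule interior_subset)
  have R3: "0 < ELR x n m" using mT ELR_pos[OF n, of m x] unfolding Theta_n_def by simp
  have key: "(1-t) * ln (PW n v) + t * ln (PW n w) \<le> ln (ELR x n m)"
    if v: "feas x n a v" "0 < PW n v" and w: "feas x n b w" "0 < PW n w" for v w
  proof -
    have fm: "feas x n m (\<lambda>i. (1-t) * v i + t * w i)" unfolding m_def by (rule feas_mix[OF v(1) w(1) t])
    have "(1-t) * ln (PW n v) + t * ln (PW n w) \<le> ln (PW n (\<lambda>i. (1-t) * v i + t * w i))"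
      by (rule ln_PW_mix[OF v w t])
    also have "\<dots> \<le> ln (ELR x n m)"
      using PW_mix_pos[OF v w t] ELR_ge[OF fm] by simp
    finally show ?thesis .
  qed
  have stepA: "(1-t) * ln (ELR x n a) \<le> ln (ELR x n m) - t * ln (PW n w)"
    if w: "feas x n b w" "0 < PW n w" for w
  proof -
    have "(1-t) * ln (Sup (PW n ` {v. feas x n a v})) \<le> ln (ELR x n m) - t * ln (PW n w)"
    proof (rule sup_ln_le)
      show "PW n ` {w. feas x n a w} \<noteq> {}" "\<And>P. P \<in> PW n ` {w. feas x n a w} \<Longrightarrow> 0 \<le> P"
        "bdd_above (PW n ` {w. feas x n a w})" "0 < Sup (PW n ` {w. feas x n a w})"
        using S_props[OF n a] by blast+
      show "0 \<le> 1 - t" using t by simp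
      fix P assume "P \<in> PW n ` {w. feas x n a w}" "0 < P"
      then obtain v where v: "feas x n a v" "P = PW n v" by blast
      have "(1-t) * ln (PW n v) + t * ln (PW n w) \<le> ln (ELR x n m)"
        using key[OF v(1) _ w] \<open>0 < P\<close> v(2) by blast
      then have "(1-t) * ln P + t * ln (PW n w) \<le> ln (ELR x n m)" using v(2) by simp
      then show "(1 - t) * ln P \<le> ln (ELR x n m) - t * ln (PW n w)" using v(2) by linarith
    qed
    then show ?thesis unfolding ELR_eq[of x n a] .
  qed
  have "t * ln (Sup (PW n ` {w. feas x n b w})) \<le> ln (ELR x n m) - (1-t) * ln (ELR x n a)"
  proof (rule sup_ln_le)
    show "PW n ` {w. feas x n b w} \<noteq> {}" "\<And>P. P \<in> PW n ` {w. feas x n b w} \<Longrightarrow> 0 \<le> P"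
      "bdd_above (PW n ` {w. feas x n b w})" "0 < Sup (PW n ` {w. feas x n b w})"
      using S_props[OF n b] by blast+
    show "0 \<le> t" using t by simp
    fix P assume "P \<in> PW n ` {w. feas x n b w}" "0 < P"
    then obtain w where w: "feas x n b w" "P = PW n w" by blast
    have "(1-t) * ln (ELR x n a) \<le> ln (ELR x n m) - t * ln (PW n w)"
      using stepA[OF w(1)] \<open>0 < P\<close> w(2) by blast
    then have "(1-t) * ln (ELR x n a) \<le> ln (ELR x n m) - t * ln P" using w(2) by simp
    then show "t * ln P \<le> ln (ELR x n m) - (1 - t) * ln (ELR x n a)" using w(2) by linarith
  qed
  then have "t * ln (ELR x n b) \<le> ln (ELR x n m) - (1-t) * ln (ELR x n a)"
    unfolding ELR_eq[of x n b] .
  then show ?thesis unfolding m_def by simp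
qed

lemma negln_ELR_convex:
  assumes n: "0 < n"
  shows "convex_on (Theta_n x n) (\<lambda>\<theta>. - ln (ELR x n \<theta>))"
proof (rule convex_onI)
  show "convex (Theta_n x n)" unfolding Theta_n_def by (simp add: convex_interior)
  fix t :: real and a b assume "0 < t" "t < 1" "a \<in> Theta_n x n" "b \<in> Theta_n x n"
  then show "- ln (ELR x n ((1 - t) *\<^sub>R a + t *\<^sub>R b)) \<le> (1 - t) * - ln (ELR x n a) + t * - ln (ELR x n b)"
    using ELR_concave[OF n, of a x b t] by simp
qed

lemma ELL_continuous:
  assumes n: "0 < n"
  shows "continuous_on (Theta_n x n) (ELL x n)"
proof -
  have "continuous_on (Theta_n x n) (\<lambda>\<theta>. - ln (ELR x n \<theta>))"
    by (rule convex_on_continuous[OF _ negln_ELR_convex[OF n]]) (simp add: Theta_n_def)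
  then have "continuous_on (Theta_n x n) (\<lambda>\<theta>. 2 * (- ln (ELR x n \<theta>)))"
    by (rule continuous_on_mult_left)
  then show ?thesis unfolding ELL_def[abs_def] by simp
qed

lemma ELL_nonneg:
  assumes n: "0 < n" and th: "\<theta> \<in> Theta_n x n"
  shows "0 \<le> ELL x n \<theta>"
proof -
  have "0 < ELR x n \<theta>" using ELR_pos[OF n] th unfolding Theta_n_def by auto
  moreover have "ELR x n \<theta> \<le> 1" using ELR_le1 th interior_subset unfolding Theta_n_def by blast
  ultimately show ?thesis unfolding ELL_def by simp
qed

lemma ELL_smean: assumes n: "0 < n" shows "ELL x n (smean x n) = 0"
proof -
  have "ELR x n (smean x n) = 1" by (rule ELR_smean[OF n])
  then show ?thesis unfolding ELL_def by simp
qed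

lemma ELL_mono_ray:
  assumes n: "0 < n" and ne: "interior (convex hull (x ` {..<n})) \<noteq> {}"
    and th: "\<theta> \<in> Theta_n x n" and l: "0 \<le> lam" "lam \<le> 1"
  shows "ELL x n (smean x n + lam *\<^sub>R (\<theta> - smean x n)) \<le> ELL x n \<theta>"
proof -
  have sT: "smean x n \<in> Theta_n x n" using smean_interior[OF n ne] unfolding Theta_n_def .
  have eq: "smean x n + lam *\<^sub>R (\<theta> - smean x n) = (1 - lam) *\<^sub>R smean x n + lam *\<^sub>R \<theta>"
    by (simp add: algebra_simps)
  have conc: "(1-lam) * ln (ELR x n (smean x n)) + lam * ln (ELR x n \<theta>) \<le> ln (ELR x n ((1 - lam) *\<^sub>R smean x n + lam *\<^sub>R \<theta>))"
    by (rule ELR_concave[OF n sT th l])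
  moreover have "ln (ELR x n \<theta>) \<le> 0"
    using ELR_pos[OF n] ELR_le1 th interior_subset unfolding Theta_n_def by (meson ln_le_zero_iff subsetD)
  ultimately have "ln (ELR x n \<theta>) \<le> ln (ELR x n ((1 - lam) *\<^sub>R smean x n + lam *\<^sub>R \<theta>))"
  proof -
    have "ELR x n (smean x n) = 1" by (rule ELR_smean[OF n])
    then have "(1-lam) * ln (ELR x n (smean x n)) = 0" by simp
    moreover have "ln (ELR x n \<theta>) \<le> lam * ln (ELR x n \<theta>)"
      using \<open>ln (ELR x n \<theta>) \<le> 0\<close> l mult_left_le_one_le[of "- ln (ELR x n \<theta>)" lam] by linarith
    ultimately show ?thesis using conc by linarith
  qed
  then show ?thesis unfolding ELL_def eq by simp
qed



lemma PW_bound_hyper: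
  assumes w: "feas x n \<theta> w" and hx: "\<And>i. i < n \<Longrightarrow> h \<le> inner a (x i)"
    and j: "j < n" and g: "0 < inner a (x j) - h"
  shows "PW n w \<le> real n ^ Suc n * ((inner a \<theta> - h) / (inner a (x j) - h))"
proof -
  have wn: "0 \<le> w i" if "i < n" for i using w that by (auto simp: feas_def)
  have ws: "sum w {..<n} = 1" and wx: "(\<Sum>i<n. w i *\<^sub>R x i) = \<theta>" using w by (auto simp: feas_def)
  have "inner a \<theta> - h = (\<Sum>i<n. w i * (inner a (x i) - h))"
  proof -
    have "inner a \<theta> = (\<Sum>i<n. w i * inner a (x i))"
      unfolding wx[symmetric] by (simp add: inner_sum_right)
    moreover have "h = (\<Sum>i<n. w i * h)" using ws by (simp add: sum_distrib_right[symmetric])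
    ultimately show ?thesis by (simp add: right_diff_distrib sum_subtractf)
  qed
  moreover have "w j * (inner a (x j) - h) \<le> (\<Sum>i<n. w i * (inner a (x i) - h))"
    by (rule member_le_sum) (use j wn hx in \<open>auto intro!: mult_nonneg_nonneg\<close>)
  ultimately have "w j * (inner a (x j) - h) \<le> inner a \<theta> - h" by simp
  then have wj: "w j \<le> (inner a \<theta> - h) / (inner a (x j) - h)" using g by (simp add: field_simps)
  have n1: "1 \<le> real n" using j by simp
  have "PW n w = (real n * w j) * (\<Prod>i\<in>{..<n} - {j}. real n * w i)"
    unfolding PW_def using j by (subst prod.remove[of _ j]) auto
  also have "(\<Prod>i\<in>{..<n} - {j}. real n * w i) \<le> real n ^ n"
  proof (rule prod_le_power)
    fix i assume "i \<in> {..<n} - {j}"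
    then have i: "i < n" by simp
    show "0 \<le> real n * w i \<and> real n * w i \<le> real n"
      using wn[OF i] feas_le1[OF w i] by (simp add: mult_left_le)
  next
    show "card ({..<n} - {j}) \<le> n" by (simp add: card_Diff_singleton_if)
  qed (rule n1)
  then have "(real n * w j) * (\<Prod>i\<in>{..<n} - {j}. real n * w i) \<le> (real n * w j) * real n ^ n"
    using wn[OF j] by (intro mult_left_mono) auto
  also have "\<dots> = real n ^ Suc n * w j" by (simp add: algebra_simps)
  also have "\<dots> \<le> real n ^ Suc n * ((inner a \<theta> - h) / (inner a (x j) - h))"
    using wj by (intro mult_left_mono) auto
  finally show ?thesis .
qed

lemma hC_unique:
  assumes n: "0 < n" and ne: "interior (convex hull (x ` {..<n})) \<noteq> {}"
    and t1: "\<theta>1 \<in> Theta_n x n" "hC x n \<theta>1 = y" and t2: "\<theta>2 \<in> Theta_n x n" "hC x n \<theta>2 = y"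
  shows "\<theta>1 = \<theta>2"
proof -
  define s where "s = smean x n"
  define c1 where "c1 = 1 + ELL x n \<theta>1 / (2 * real n)"
  define c2 where "c2 = 1 + ELL x n \<theta>2 / (2 * real n)"
  have c1: "1 \<le> c1" unfolding c1_def using ELL_nonneg[OF n t1(1)] n by simp
  have c2: "1 \<le> c2" unfolding c2_def using ELL_nonneg[OF n t2(1)] n by simp
  have e1: "\<theta>1 - s = (1 / c1) *\<^sub>R (y - s)"
    using t1(2) c1 unfolding hC_def c1_def[symmetric] s_def[symmetric] by auto
  have e2: "\<theta>2 - s = (1 / c2) *\<^sub>R (y - s)"
    using t2(2) c2 unfolding hC_def c2_def[symmetric] s_def[symmetric] by auto
  have main: "1 / ca = 1 / cb"
    if ta: "\<theta>a \<in> Theta_n x n" and tb: "\<theta>b \<in> Theta_n x n"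
      and ca: "1 \<le> ca" "ca = 1 + ELL x n \<theta>a / (2 * real n)"
      and cb: "1 \<le> cb" "cb = 1 + ELL x n \<theta>b / (2 * real n)"
      and ea: "\<theta>a - s = (1 / ca) *\<^sub>R (y - s)" and eb: "\<theta>b - s = (1 / cb) *\<^sub>R (y - s)"
      and le: "1 / ca \<le> 1 / cb" and ys: "y \<noteq> s"
    for \<theta>a \<theta>b ca cb
  proof -
    define lam where "lam = (1 / ca) / (1 / cb)"
    have icb: "0 < 1 / cb" using cb by simp
    have gen: "p / q \<le> 1" if "p \<le> q" "0 < q" for p q :: real using that by (simp add: divide_le_eq)
    have lam: "0 \<le> lam" "lam \<le> 1" unfolding lam_def using ca(1) cb(1) gen[OF le icb] by auto
    have "\<theta>a = s + lam *\<^sub>R (\<theta>b - s)"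
    proof -
      have "lam *\<^sub>R (\<theta>b - s) = (lam * (1 / cb)) *\<^sub>R (y - s)" unfolding eb by simp
      also have "lam * (1 / cb) = 1 / ca" unfolding lam_def using cb by simp
      finally have A: "lam *\<^sub>R (\<theta>b - s) = \<theta>a - s" using ea by simp
      show ?thesis by (simp add: A)
    qed
    then have "ELL x n \<theta>a \<le> ELL x n \<theta>b"
      using ELL_mono_ray[OF n ne tb lam] s_def by simp
    then have "ca \<le> cb" using ca(2) cb(2) n by (simp add: divide_right_mono)
    then have "1 / cb \<le> 1 / ca" using ca by (simp add: frac_le)
    then show ?thesis using le by simp
  qed
  show ?thesis
  proof (cases "y = s")
    case True
    then show ?thesis using e1 e2 by simp
  next
    case False
    have "1 / c1 = 1 / c2"
    proof (cases "1 / c1 \<le> 1 / c2")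
      case True
      show ?thesis by (rule main[OF t1(1) t2(1) c1 c1_def c2 c2_def e1 e2 True False])
    next
      case le: False
      show ?thesis using main[OF t2(1) t1(1) c2 c2_def c1 c1_def e2 e1 _ False] le by simp
    qed
    then have "\<theta>1 - s = \<theta>2 - s" using e1 e2 by simp
    then show ?thesis by simp
  qed
qed



lemma hC_exists:
  assumes n: "0 < n" and ne: "interior (convex hull (x ` {..<n})) \<noteq> {}"
  shows "\<exists>\<theta>\<in>Theta_n x n. hC x n \<theta> = y"
proof -
  define s where "s = smean x n"
  define H where "H = convex hull (x ` {..<n})"
  define \<Theta> where "\<Theta> = Theta_n x n"
  have \<Theta>H: "\<Theta> = interior H" unfolding \<Theta>_def H_def Theta_n_def ..
  have sT: "s \<in> \<Theta>" unfolding s_def \<Theta>H H_def by (rule smean_interior[OF n ne])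
  have openT: "open \<Theta>" unfolding \<Theta>H by simp
  have convT: "convex \<Theta>" unfolding \<Theta>H H_def by (simp add: convex_interior)
  have TH: "\<Theta> \<subseteq> H" unfolding \<Theta>H by (rule interior_subset)
  show ?thesis
  proof (cases "y = s")
    case True
    then show ?thesis using sT unfolding hC_def s_def \<Theta>_def by auto
  next
    case False
    define u where "u = y - s"
    have u0: "u \<noteq> 0" using False u_def by simp
    then have nu: "0 < norm u" by simp
    define T where "T = {t. 0 \<le> t \<and> s + t *\<^sub>R u \<in> \<Theta>}"
    have "bounded H" unfolding H_def by (simp add: bounded_convex_hull finite_imp_bounded)
    then obtain B where B: "\<And>z. z \<in> H \<Longrightarrow> norm z \<le> B" by (meson bounded_iff)
    have Tbd: "t \<le> (B + norm s) / norm u" if "t \<in> T" for t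
    proof -
      have "s + t *\<^sub>R u \<in> H" using that TH T_def by auto
      then have "norm (s + t *\<^sub>R u) \<le> B" by (rule B)
      moreover have "norm (t *\<^sub>R u) \<le> norm (s + t *\<^sub>R u) + norm s"
        using norm_triangle_ineq4[of "s + t *\<^sub>R u" s] by simp
      moreover have "norm (t *\<^sub>R u) = t * norm u" using that T_def by simp
      ultimately have "t * norm u \<le> B + norm s" by linarith
      then show ?thesis using nu by (simp add: field_simps)
    qed
    have bddT: "bdd_above T" using Tbd by (intro bdd_aboveI) blast
    obtain e where e: "0 < e" "ball s e \<subseteq> \<Theta>" using openT sT by (meson openE)
    define t0 where "t0 = e / (2 * norm u)"
    have t0: "0 < t0" unfolding t0_def using e nu by simp
    have "s + t0 *\<^sub>R u \<in> ball s e"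
    proof -
      have "dist s (s + t0 *\<^sub>R u) = t0 * norm u" using t0 by (simp add: dist_norm)
      also have "\<dots> = e / 2" unfolding t0_def using nu by simp
      finally show ?thesis using e by simp
    qed
    then have t0T: "t0 \<in> T" using e t0 T_def by auto
    define ts where "ts = Sup T"
    have tsT: "t \<le> ts" if "t \<in> T" for t unfolding ts_def by (rule cSup_upper[OF that bddT])
    have ts0: "0 < ts" using tsT[OF t0T] t0 by simp
    have seg: "s + t *\<^sub>R u \<in> \<Theta>" if "0 \<le> t" "t < ts" for t
    proof -
      have "\<exists>t'\<in>T. t < t'" using less_cSup_iff[of T t] t0T bddT \<open>t < ts\<close> unfolding ts_def by auto
      then obtain t' where t': "t' \<in> T" "t < t'" by blast
      then have t'0: "0 < t'" using that by simp
      have p': "s + t' *\<^sub>R u \<in> \<Theta>" using t' T_def by auto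
      have "(1 - t / t') *\<^sub>R s + (t / t') *\<^sub>R (s + t' *\<^sub>R u) \<in> \<Theta>"
        using convexD_alt[OF convT sT p', of "t / t'"] that t' t'0 by simp
      moreover have "(1 - t / t') *\<^sub>R s + (t / t') *\<^sub>R (s + t' *\<^sub>R u) = s + t *\<^sub>R u"
        using t'0 by (simp add: algebra_simps)
      ultimately show ?thesis by simp
    qed
    define b where "b = s + ts *\<^sub>R u"
    have bT: "b \<notin> \<Theta>"
    proof
      assume "b \<in> \<Theta>"
      then obtain e' where e': "0 < e'" "ball b e' \<subseteq> \<Theta>" using openT by (meson openE)
      define t2 where "t2 = ts + e' / (2 * norm u)"
      have "s + t2 *\<^sub>R u \<in> ball b e'"
      proof -
        have "s + t2 *\<^sub>R u = b + (e' / (2 * norm u)) *\<^sub>R u" unfolding t2_def b_def by (simp add: algebra_simps)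
        then have "dist b (s + t2 *\<^sub>R u) = e' / (2 * norm u) * norm u" using e' by (simp add: dist_norm)
        also have "\<dots> = e' / 2" using nu by simp
        finally show ?thesis using e' by simp
      qed
      then have "t2 \<in> T" using e' ts0 unfolding T_def t2_def by (auto intro!: add_nonneg_nonneg)
      then have "t2 \<le> ts" by (rule tsT)
      moreover have "ts < t2" unfolding t2_def using e' nu by simp
      ultimately show False by simp
    qed
    have bH: "b \<in> H"
    proof (rule ccontr)
      assume "b \<notin> H"
      moreover have "closed H" unfolding H_def by (simp add: compact_imp_closed finite_imp_compact_convex_hull)
      ultimately obtain e' where e': "0 < e'" "ball b e' \<subseteq> - H"
        by (meson open_Compl openE ComplI)
      define \<delta> where "\<delta> = min (ts / 2) (e' / (2 * norm u))"
      have \<delta>: "0 < \<delta>" "\<delta> \<le> ts / 2" "\<delta> \<le> e' / (2 * norm u)" unfolding \<delta>_def using ts0 e' nu by auto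
      have "s + (ts - \<delta>) *\<^sub>R u \<in> \<Theta>" using seg[of "ts - \<delta>"] \<delta> by simp
      then have in1: "s + (ts - \<delta>) *\<^sub>R u \<in> H" using TH by auto
      have "dist b (s + (ts - \<delta>) *\<^sub>R u) = \<delta> * norm u"
        unfolding b_def using \<delta> by (simp add: dist_norm algebra_simps)
      also have "\<dots> \<le> e' / (2 * norm u) * norm u" using \<delta> nu by (intro mult_right_mono) auto
      also have "\<dots> = e' / 2" using nu by simp
      finally have "s + (ts - \<delta>) *\<^sub>R u \<in> ball b e'" using e' by simp
      then show False using e' in1 by auto
    qed
    have convH: "convex H" unfolding H_def by simp
    have riH: "rel_interior H = interior H" using ne H_def by (simp add: rel_interior_nonempty_interior)
    obtain a where a0: "a \<noteq> 0" and aH: "\<And>z. z \<in> H \<Longrightarrow> inner a b \<le> inner a z"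
        and aI: "\<And>z. z \<in> rel_interior H \<Longrightarrow> inner a b < inner a z"
      using supporting_hyperplane_rel_boundary[OF convH bH] bT riH \<Theta>H by auto
    define h where "h = inner a b"
    have hs: "h < inner a s" unfolding h_def using aI sT riH \<Theta>H by auto
    have hx: "h \<le> inner a (x i)" if "i < n" for i
      unfolding h_def by (rule aH) (use that H_def in \<open>auto intro: hull_inc\<close>)
    obtain j where j: "j < n" "h < inner a (x j)"
    proof (rule ccontr)
      assume "\<not> thesis"
      with that have allle: "inner a (x i) \<le> h" if "i < n" for i using that by (meson not_le)
      have "inner a s = (1 / real n) * (\<Sum>i<n. inner a (x i))"
        unfolding s_def smean_def by (simp add: inner_sum_right)
      also have "\<dots> \<le> (1 / real n) * (\<Sum>i<n. h)"
        using allle by (intro mult_left_mono sum_mono) auto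
      also have "\<dots> = h" using n by simp
      finally show False using hs by simp
    qed
    define g where "g = inner a (x j) - h"
    have g: "0 < g" unfolding g_def using j by simp
    have au: "inner a u < 0"
    proof -
      have "h = inner a s + ts * inner a u" unfolding h_def b_def by (simp add: inner_add_right)
      then have "ts * inner a u < 0" using hs by simp
      then show ?thesis using ts0 by (simp add: mult_less_0_iff)
    qed
    define K0 where "K0 = real n ^ Suc n * (- inner a u) / g"
    have K0: "0 < K0" unfolding K0_def by (intro divide_pos_pos mult_pos_pos) (use n au g in auto)
    have Rbound: "ELR x n (s + t *\<^sub>R u) \<le> K0 * (ts - t)" if "0 \<le> t" "t < ts" for t
    proof -
      have tT: "s + t *\<^sub>R u \<in> \<Theta>" by (rule seg[OF that])
      then have tH: "s + t *\<^sub>R u \<in> convex hull (x ` {..<n})" using TH H_def by auto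
      have eqi: "inner a (s + t *\<^sub>R u) - h = (ts - t) * (- inner a u)"
        unfolding h_def b_def by (simp add: inner_add_right algebra_simps)
      show ?thesis
      proof (rule ELR_le[OF tH])
        fix w assume w: "feas x n (s + t *\<^sub>R u) w"
        have "PW n w \<le> real n ^ Suc n * ((inner a (s + t *\<^sub>R u) - h) / (inner a (x j) - h))"
          by (rule PW_bound_hyper[OF w hx j(1)]) (use j in auto)
        also have "\<dots> = K0 * (ts - t)" unfolding eqi K0_def g_def by (simp add: divide_inverse mult_ac)
        finally show "PW n w \<le> K0 * (ts - t)" .
      qed
    qed
    define \<delta> where "\<delta> = min (ts / 2) (exp (- 2 * real n / ts) / K0)"
    have \<delta>1: "0 < \<delta>" unfolding \<delta>_def using ts0 K0 by simp
    have \<delta>2: "\<delta> \<le> ts / 2" unfolding \<delta>_def by (rule min.cobounded1)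
    have \<delta>3: "\<delta> \<le> exp (- 2 * real n / ts) / K0" unfolding \<delta>_def by (rule min.cobounded2)
    note \<delta> = \<delta>1 \<delta>2 \<delta>3
    define t1 where "t1 = ts - \<delta>"
    have t1: "0 < t1" "t1 < ts" "ts / 2 \<le> t1" unfolding t1_def using \<delta> ts0 by auto
    have t1T: "s + t1 *\<^sub>R u \<in> \<Theta>" using seg t1 by simp
    have R1pos: "0 < ELR x n (s + t1 *\<^sub>R u)" using ELR_pos[OF n] t1T \<Theta>H H_def by auto
    have "ELR x n (s + t1 *\<^sub>R u) \<le> K0 * \<delta>" using Rbound[of t1] t1 unfolding t1_def by simp
    also have "\<dots> \<le> exp (- 2 * real n / ts)" using \<delta> K0 by (simp add: field_simps)
    finally have "ln (ELR x n (s + t1 *\<^sub>R u)) \<le> - 2 * real n / ts"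
      using R1pos by (metis ln_exp ln_le_cancel_iff exp_gt_zero)
    then have L1: "4 * real n / ts \<le> ELL x n (s + t1 *\<^sub>R u)" unfolding ELL_def by simp
    define f where "f t = t * (1 + ELL x n (s + t *\<^sub>R u) / (2 * real n))" for t
    have "1 \<le> f t1"
    proof -
      have "2 / ts \<le> ELL x n (s + t1 *\<^sub>R u) / (2 * real n)" using L1 n ts0 by (simp add: field_simps)
      then have "1 + 2 / ts \<le> 1 + ELL x n (s + t1 *\<^sub>R u) / (2 * real n)" by simp
      moreover have "0 \<le> 1 + 2 / ts" using ts0 by simp
      ultimately have "(ts / 2) * (1 + 2 / ts) \<le> t1 * (1 + ELL x n (s + t1 *\<^sub>R u) / (2 * real n))"
        using t1 ts0 by (intro mult_mono) auto
      moreover have "(ts / 2) * (1 + 2 / ts) = ts / 2 + 1" using ts0 by (simp add: field_simps)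
      ultimately show ?thesis unfolding f_def using ts0 by simp
    qed
    moreover have "f 0 \<le> 1" unfolding f_def by simp
    moreover have "continuous_on {0..t1} f"
    proof -
      have cl: "continuous_on {0..t1} (\<lambda>t. s + t *\<^sub>R u)" by (intro continuous_intros)
      have img: "(\<lambda>t. s + t *\<^sub>R u) ` {0..t1} \<subseteq> \<Theta>" using seg t1 by auto
      have "continuous_on {0..t1} (\<lambda>t. ELL x n (s + t *\<^sub>R u))"
        using continuous_on_compose2[OF ELL_continuous[OF n] cl] img \<Theta>_def by simp
      then show ?thesis unfolding f_def by (intro continuous_intros) (use n in auto)
    qed
    ultimately obtain t where t: "0 \<le> t" "t \<le> t1" "f t = 1"
      using IVT'[of f 0 1 t1] t1 by auto
    have tT: "s + t *\<^sub>R u \<in> \<Theta>" using seg t t1 by simp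
    have "hC x n (s + t *\<^sub>R u) = s + (f t) *\<^sub>R u"
      unfolding hC_def s_def[symmetric] f_def by simp
    also have "\<dots> = y" using t u_def by simp
    finally show ?thesis using tT \<Theta>_def by blast
  qed
qed

lemma hC_inv_props:
  assumes n: "0 < n" and ne: "interior (convex hull (x ` {..<n})) \<noteq> {}"
  shows "hC_inv x n y \<in> Theta_n x n \<and> hC x n (hC_inv x n y) = y"
proof -
  have "\<exists>!\<theta>. \<theta> \<in> Theta_n x n \<and> hC x n \<theta> = y"
    using hC_exists[OF n ne, of y] hC_unique[OF n ne] by blast
  then show ?thesis unfolding hC_inv_def by (rule theI')
qed



lemma inv_facts:
  fixes x :: "nat \<Rightarrow> real^'d" and y :: "real^'d"
  assumes n: "0 < n" and ne: "interior (convex hull (x ` {..<n})) \<noteq> {}"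
  defines "th \<equiv> hC_inv x n y"
  shows "th \<in> Theta_n x n"
    and "th \<in> closed_segment (smean x n) y"
    and "norm (th - y) = ELL x n th / (2 * real n) * norm (th - smean x n)"
    and "norm (th - smean x n) \<le> norm (y - smean x n)"
proof -
  define s where "s = smean x n"
  have P: "th \<in> Theta_n x n" "hC x n th = y" using hC_inv_props[OF n ne, of y] th_def by auto
  then show "th \<in> Theta_n x n" by simp
  define l where "l = ELL x n th"
  have l: "0 \<le> l" unfolding l_def by (rule ELL_nonneg[OF n P(1)])
  define c where "c = 1 + l / (2 * real n)"
  have c: "1 \<le> c" unfolding c_def using l n by simp
  have ye: "y = s + c *\<^sub>R (th - s)" using P(2) unfolding hC_def c_def l_def s_def by simp
  have "th = (1 - 1/c) *\<^sub>R s + (1/c) *\<^sub>R y"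
  proof -
    have "(1 - 1/c) *\<^sub>R s + (1/c) *\<^sub>R y = s + (1/c) *\<^sub>R (y - s)" by (simp add: algebra_simps)
    also have "(1/c) *\<^sub>R (y - s) = th - s" unfolding ye using c by simp
    finally show ?thesis by simp
  qed
  moreover have "0 \<le> 1/c" "1/c \<le> 1" using c by auto
  ultimately show "th \<in> closed_segment (smean x n) y" unfolding in_segment s_def by blast
  have "th - y = (- (l / (2 * real n))) *\<^sub>R (th - s)" unfolding ye c_def by (simp add: algebra_simps)
  then have "norm (th - y) = \<bar>l / (2 * real n)\<bar> * norm (th - s)" by simp
  then show "norm (th - y) = ELL x n th / (2 * real n) * norm (th - smean x n)"
    using l unfolding l_def s_def by simp
  have "norm (y - s) = c * norm (th - s)" unfolding ye using c by simp
  moreover have "norm (th - s) \<le> c * norm (th - s)" using c mult_right_mono[OF c norm_ge_zero[of "th - s"]] by simp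
  ultimately show "norm (th - smean x n) \<le> norm (y - smean x n)" unfolding s_def by simp
qed

lemma ln_1p_lower: assumes "\<bar>u\<bar> \<le> 1/2" shows "u - 2 * u\<^sup>2 \<le> ln (1 + (u::real))"
proof (cases "0 \<le> u")
  case True
  then have "u - u\<^sup>2 \<le> ln (1 + u)" using assms by (intro ln_one_plus_pos_lower_bound) auto
  then show ?thesis by (smt (verit) zero_le_power2)
next
  case False
  then have "- (-u) - 2 * (-u)\<^sup>2 \<le> ln (1 - (-u))" using assms by (intro ln_one_minus_pos_lower_bound) auto
  then show ?thesis by simp
qed

lemma ELL_upper:
  assumes n: "0 < n" and u: "\<And>i. i < n \<Longrightarrow> \<bar>u i\<bar> \<le> 1/2" and su: "(\<Sum>i<n. u i) = 0"
    and th: "(\<Sum>i<n. ((1 + u i) / real n) *\<^sub>R x i) = \<theta>"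
  shows "ELL x n \<theta> \<le> 4 * (\<Sum>i<n. (u i)\<^sup>2)"
proof -
  define w where "w i = (1 + u i) / real n" for i
  have fw: "feas x n \<theta> w"
    unfolding feas_def
  proof (intro conjI allI impI)
    fix i assume "i < n" then show "0 \<le> w i" unfolding w_def using u[of i] by auto
  next
    have "sum w {..<n} = (real n + (\<Sum>i<n. u i)) / real n"
      unfolding w_def by (simp add: sum_divide_distrib[symmetric] sum.distrib)
    then show "sum w {..<n} = 1" using su n by simp
  next
    show "(\<Sum>i<n. w i *\<^sub>R x i) = \<theta>" using th unfolding w_def .
  qed
  have pe: "real n * w i = 1 + u i" for i unfolding w_def using n by simp
  have up: "0 < 1 + u i" if "i < n" for i using u[OF that] by auto
  have PWe: "PW n w = (\<Prod>i<n. 1 + u i)" unfolding PW_def pe ..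
  have PWpos: "0 < PW n w" unfolding PWe by (rule prod_pos) (use up in auto)
  have "ln (PW n w) = (\<Sum>i<n. ln (1 + u i))" unfolding PWe
    by (rule ln_prod) (use up in \<open>auto, smt (verit)\<close>)
  also have "\<dots> \<ge> (\<Sum>i<n. u i - 2 * (u i)\<^sup>2)" by (intro sum_mono ln_1p_lower u) auto
  finally have "(\<Sum>i<n. u i - 2 * (u i)\<^sup>2) \<le> ln (PW n w)" .
  moreover have "(\<Sum>i<n. u i - 2 * (u i)\<^sup>2) = - 2 * (\<Sum>i<n. (u i)\<^sup>2)"
    using su by (simp add: sum_subtractf sum_distrib_left sum_negf)
  moreover have "ln (PW n w) \<le> ln (ELR x n \<theta>)" using ELR_ge[OF fw] PWpos by simp
  ultimately have "- 2 * (\<Sum>i<n. (u i)\<^sup>2) \<le> ln (ELR x n \<theta>)" by linarith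
  then show ?thesis unfolding ELL_def by simp
qed



definition phi :: "real^'d \<Rightarrow> real^'d \<Rightarrow> real^'d" where
  "phi \<theta>0 v = (1 / (1 + (norm (v - \<theta>0))\<^sup>2)) *\<^sub>R (v - \<theta>0)"

lemma norm_phi: "norm (phi \<theta>0 v) \<le> 1/2"
proof -
  define r where "r = norm (v - \<theta>0)"
  have r: "0 \<le> r" unfolding r_def by simp
  have "norm (phi \<theta>0 v) = r / (1 + r\<^sup>2)" unfolding phi_def r_def by (simp add: add_pos_nonneg)
  also have "\<dots> \<le> 1/2"
  proof -
    have "0 \<le> (r - 1)\<^sup>2" by simp
    then have "2 * r \<le> 1 + r\<^sup>2" by (simp add: power2_eq_square algebra_simps)
    then show ?thesis by (simp add: field_simps add_pos_nonneg)
  qed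
  finally show ?thesis .
qed

definition Zb :: "(nat \<Rightarrow> real^'d) \<Rightarrow> nat \<Rightarrow> real^'d \<Rightarrow> real^'d" where
  "Zb x n \<theta>0 = (1 / real n) *\<^sub>R (\<Sum>i<n. phi \<theta>0 (x i))"

lemma norm_Zb: assumes n: "0 < n" shows "norm (Zb x n \<theta>0) \<le> 1/2"
proof -
  have "norm (\<Sum>i<n. phi \<theta>0 (x i)) \<le> (\<Sum>i<n. norm (phi \<theta>0 (x i)))" by (rule norm_sum)
  also have "\<dots> \<le> (\<Sum>i<n. 1/2)" by (intro sum_mono norm_phi)
  finally have "norm (\<Sum>i<n. phi \<theta>0 (x i)) \<le> real n / 2" by simp
  then show ?thesis unfolding Zb_def using n by (simp add: field_simps)
qed

definition Lmap :: "(nat \<Rightarrow> real^'d) \<Rightarrow> nat \<Rightarrow> real^'d \<Rightarrow> real^'d \<Rightarrow> real^'d" where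
  "Lmap x n \<theta>0 a = (1 / real n) *\<^sub>R (\<Sum>i<n. (inner a (phi \<theta>0 (x i) - Zb x n \<theta>0)) *\<^sub>R (x i - \<theta>0))"

lemma Lmap_linear: "linear (Lmap x n \<theta>0)"
proof (rule linearI)
  fix a b and r :: real
  show "Lmap x n \<theta>0 (a + b) = Lmap x n \<theta>0 a + Lmap x n \<theta>0 b"
    unfolding Lmap_def by (simp add: inner_add_left scaleR_add_left sum.distrib scaleR_add_right)
  show "Lmap x n \<theta>0 (r *\<^sub>R a) = r *\<^sub>R Lmap x n \<theta>0 a"
    unfolding Lmap_def by (simp add: scaleR_sum_right)
qed

definition Bm :: "(nat \<Rightarrow> real^'d) \<Rightarrow> nat \<Rightarrow> real^'d \<Rightarrow> 'd \<Rightarrow> 'd \<Rightarrow> real" where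
  "Bm x n \<theta>0 k j = (1 / real n) * (\<Sum>i<n. (x i - \<theta>0) $ k * (phi \<theta>0 (x i)) $ j)"

lemma Lmap_comp:
  assumes n: "0 < n"
  shows "Lmap x n \<theta>0 a $ k = (\<Sum>j\<in>UNIV. a $ j * Bm x n \<theta>0 k j)
           - inner a (Zb x n \<theta>0) * (smean x n - \<theta>0) $ k"
proof -
  define Z where "Z i = phi \<theta>0 (x i)" for i
  define Y where "Y i = x i - \<theta>0" for i
  have sY: "smean x n - \<theta>0 = (1 / real n) *\<^sub>R (\<Sum>i<n. Y i)"
  proof -
    have "(1 / real n) *\<^sub>R (\<Sum>i<n. Y i) = (1 / real n) *\<^sub>R (\<Sum>i<n. x i) - (1 / real n) *\<^sub>R (\<Sum>i<n. \<theta>0)"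
      unfolding Y_def by (simp add: sum_subtractf scaleR_diff_right)
    also have "(1 / real n) *\<^sub>R (\<Sum>i<n. \<theta>0) = \<theta>0" unfolding sum_constant_scaleR using n by simp
    finally show ?thesis unfolding smean_def by simp
  qed
  have "Lmap x n \<theta>0 a $ k = (1 / real n) * (\<Sum>i<n. (inner a (Z i) - inner a (Zb x n \<theta>0)) * Y i $ k)"
    unfolding Lmap_def Z_def Y_def by (simp add: inner_diff_right sum_component)
  also have "\<dots> = (1 / real n) * (\<Sum>i<n. inner a (Z i) * Y i $ k) - inner a (Zb x n \<theta>0) * ((1 / real n) * (\<Sum>i<n. Y i $ k))"
    by (simp add: left_diff_distrib sum_subtractf sum_distrib_left right_diff_distrib mult.assoc mult.left_commute)
  also have "(1 / real n) * (\<Sum>i<n. Y i $ k) = (smean x n - \<theta>0) $ k"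
    unfolding sY by (simp add: sum_component)
  also have "(1 / real n) * (\<Sum>i<n. inner a (Z i) * Y i $ k) = (\<Sum>j\<in>UNIV. a $ j * Bm x n \<theta>0 k j)"
  proof -
    have "(\<Sum>i<n. inner a (Z i) * Y i $ k) = (\<Sum>i<n. \<Sum>j\<in>UNIV. a $ j * (Y i $ k * Z i $ j))"
      unfolding inner_vec_def by (intro sum.cong refl) (simp add: sum_distrib_left sum_distrib_right mult_ac)
    also have "\<dots> = (\<Sum>j\<in>UNIV. \<Sum>i<n. a $ j * (Y i $ k * Z i $ j))" by (rule sum.swap)
    also have "\<dots> = (\<Sum>j\<in>UNIV. a $ j * (\<Sum>i<n. Y i $ k * Z i $ j))" by (simp add: sum_distrib_left)
    finally show ?thesis unfolding Bm_def Y_def Z_def by (simp add: sum_distrib_left mult_ac)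
  qed
  finally show ?thesis .
qed

lemma solve_L:
  fixes x :: "nat \<Rightarrow> real^'d" and A :: "real^'d^'d"
  assumes n: "0 < n" and c: "0 < c" and Ab: "\<And>a. c * norm a \<le> norm (A *v a)"
    and Bc: "\<And>k j. \<bar>Bm x n \<theta>0 k j - A $ k $ j\<bar> \<le> \<eta>"
    and sc: "norm (smean x n - \<theta>0) \<le> \<rho>"
    and small: "real CARD('d) * (real CARD('d) * \<eta> + \<rho>) \<le> c / 2"
  shows "\<exists>a. Lmap x n \<theta>0 a = \<delta> \<and> norm a \<le> 2 * norm \<delta> / c"
proof -
  have \<eta>0: "0 \<le> \<eta>" using Bc[of undefined undefined] by simp
  have diff: "norm (Lmap x n \<theta>0 a - A *v a) \<le> c / 2 * norm a" for a
  proof -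
    have comp: "\<bar>(Lmap x n \<theta>0 a - A *v a) $ k\<bar> \<le> (real CARD('d) * \<eta> + \<rho>) * norm a" for k
    proof -
      have "(Lmap x n \<theta>0 a - A *v a) $ k = (\<Sum>j\<in>UNIV. a $ j * (Bm x n \<theta>0 k j - A $ k $ j))
          - inner a (Zb x n \<theta>0) * (smean x n - \<theta>0) $ k"
      proof -
        have "(A *v a) $ k = (\<Sum>j\<in>UNIV. a $ j * A $ k $ j)"
          by (simp add: matrix_vector_mult_def mult.commute)
        then show ?thesis unfolding vector_minus_component Lmap_comp[OF n]
          by (simp add: right_diff_distrib sum_subtractf)
      qed
      also have "\<bar>\<dots>\<bar> \<le> (\<Sum>j\<in>UNIV. \<bar>a $ j\<bar> * \<bar>Bm x n \<theta>0 k j - A $ k $ j\<bar>)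
          + \<bar>inner a (Zb x n \<theta>0)\<bar> * \<bar>(smean x n - \<theta>0) $ k\<bar>"
      proof -
        have t1: "\<bar>(\<Sum>j\<in>UNIV. a $ j * (Bm x n \<theta>0 k j - A $ k $ j))\<bar> \<le> (\<Sum>j\<in>UNIV. \<bar>a $ j * (Bm x n \<theta>0 k j - A $ k $ j)\<bar>)"
          by (rule sum_abs)
        have t2: "(\<Sum>j\<in>UNIV. \<bar>a $ j * (Bm x n \<theta>0 k j - A $ k $ j)\<bar>) = (\<Sum>j\<in>UNIV. \<bar>a $ j\<bar> * \<bar>Bm x n \<theta>0 k j - A $ k $ j\<bar>)"
          by (simp add: abs_mult)
        have t3: "\<bar>inner a (Zb x n \<theta>0) * (smean x n - \<theta>0) $ k\<bar> = \<bar>inner a (Zb x n \<theta>0)\<bar> * \<bar>(smean x n - \<theta>0) $ k\<bar>"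
          by (rule abs_mult)
        show ?thesis using abs_triangle_ineq4[of "\<Sum>j\<in>UNIV. a $ j * (Bm x n \<theta>0 k j - A $ k $ j)" "inner a (Zb x n \<theta>0) * (smean x n - \<theta>0) $ k"] t1 t2 t3
          by linarith
      qed
      also have "(\<Sum>j\<in>UNIV. \<bar>a $ j\<bar> * \<bar>Bm x n \<theta>0 k j - A $ k $ j\<bar>) \<le> (\<Sum>j\<in>(UNIV::'d set). norm a * \<eta>)"
        by (intro sum_mono mult_mono[OF component_le_norm_cart Bc] norm_ge_zero abs_ge_zero)
      also have "\<bar>inner a (Zb x n \<theta>0)\<bar> * \<bar>(smean x n - \<theta>0) $ k\<bar> \<le> norm a * \<rho>"
      proof (rule mult_mono)
        have "\<bar>inner a (Zb x n \<theta>0)\<bar> \<le> norm a * norm (Zb x n \<theta>0)" by (rule Cauchy_Schwarz_ineq2)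
        also have "\<dots> \<le> norm a * 1" using norm_Zb[OF n, of x \<theta>0] by (intro mult_left_mono) auto
        finally show "\<bar>inner a (Zb x n \<theta>0)\<bar> \<le> norm a" by simp
        show "\<bar>(smean x n - \<theta>0) $ k\<bar> \<le> \<rho>" using component_le_norm_cart[of "smean x n - \<theta>0" k] sc by linarith
      qed auto
      finally show ?thesis by (simp add: algebra_simps)
    qed
    have "norm (Lmap x n \<theta>0 a - A *v a) \<le> (\<Sum>k\<in>UNIV. \<bar>(Lmap x n \<theta>0 a - A *v a) $ k\<bar>)" by (rule norm_le_l1_cart)
    also have "\<dots> \<le> (\<Sum>k\<in>(UNIV::'d set). (real CARD('d) * \<eta> + \<rho>) * norm a)" by (intro sum_mono comp)
    also have "\<dots> = real CARD('d) * (real CARD('d) * \<eta> + \<rho>) * norm a" by simp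
    also have "\<dots> \<le> c / 2 * norm a" using small by (intro mult_right_mono) auto
    finally show ?thesis .
  qed
  have lower: "c / 2 * norm a \<le> norm (Lmap x n \<theta>0 a)" for a
  proof -
    have "norm (A *v a) \<le> norm (Lmap x n \<theta>0 a) + norm (Lmap x n \<theta>0 a - A *v a)"
      using norm_triangle_sub[of "A *v a" "Lmap x n \<theta>0 a"] norm_minus_commute[of "A *v a" "Lmap x n \<theta>0 a"] by simp
    then show ?thesis using Ab[of a] diff[of a] by linarith
  qed
  have inj: "inj (Lmap x n \<theta>0)"
  proof (rule linear_injective_0[THEN iffD2, OF Lmap_linear], intro allI impI)
    fix a assume "Lmap x n \<theta>0 a = 0"
    then have "c / 2 * norm a \<le> 0" using lower[of a] by simp
    then show "a = 0" using c by (simp add: mult_le_0_iff)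
  qed
  have "surj (Lmap x n \<theta>0)" by (rule linear_inj_imp_surj[OF Lmap_linear inj])
  then obtain a where a: "Lmap x n \<theta>0 a = \<delta>" by (metis surjD)
  have "c / 2 * norm a \<le> norm \<delta>" using lower[of a] a by simp
  then have "norm a \<le> 2 * norm \<delta> / c" using c by (simp add: field_simps)
  then show ?thesis using a by blast
qed



lemma det_final:
  fixes x :: "nat \<Rightarrow> real^'d" and A :: "real^'d^'d"
  assumes n: "0 < n" and ne: "interior (convex hull (x ` {..<n})) \<noteq> {}"
    and c: "0 < c" and Ab: "\<And>a. c * norm a \<le> norm (A *v a)"
    and Bc: "\<And>k j. \<bar>Bm x n \<theta>0 k j - A $ k $ j\<bar> \<le> \<eta>"
    and sc: "norm (smean x n - \<theta>0) \<le> r"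
    and small: "real CARD('d) * (real CARD('d) * \<eta> + r) \<le> c / 2"
    and rs: "2 * r / c \<le> 1/2"
  shows "norm (hC_inv x n \<theta>0 - \<theta>0) \<le> 8 * r ^ 3 / c\<^sup>2"
proof -
  define th where "th = hC_inv x n \<theta>0"
  define s where "s = smean x n"
  have thT: "th \<in> Theta_n x n" using inv_facts(1)[OF n ne] th_def by simp
  have eqn: "norm (th - \<theta>0) = ELL x n th / (2 * real n) * norm (th - s)"
    using inv_facts(3)[OF n ne] th_def s_def by simp
  have "norm (th - s) \<le> norm (\<theta>0 - s)" using inv_facts(4)[OF n ne] th_def s_def by simp
  also have "\<dots> \<le> r" using sc s_def by (simp add: norm_minus_commute)
  finally have ths: "norm (th - s) \<le> r" .
  have r0: "0 \<le> r" using ths norm_ge_zero order_trans by blast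
  obtain a where a: "Lmap x n \<theta>0 a = th - s" and na: "norm a \<le> 2 * norm (th - s) / c"
    using solve_L[OF n c Ab Bc sc small, of "th - s"] by blast
  have na2: "norm a \<le> 2 * r / c"
    using na ths c by (smt (verit) divide_right_mono mult_left_mono)
  define u where "u i = inner a (phi \<theta>0 (x i) - Zb x n \<theta>0)" for i
  have ub: "\<bar>u i\<bar> \<le> norm a" for i
  proof -
    have "\<bar>u i\<bar> \<le> norm a * norm (phi \<theta>0 (x i) - Zb x n \<theta>0)" unfolding u_def by (rule Cauchy_Schwarz_ineq2)
    also have "norm (phi \<theta>0 (x i) - Zb x n \<theta>0) \<le> 1"
      using norm_triangle_ineq4[of "phi \<theta>0 (x i)" "Zb x n \<theta>0"] norm_phi[of \<theta>0 "x i"] norm_Zb[OF n, of x \<theta>0] by linarith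
    then have "norm a * norm (phi \<theta>0 (x i) - Zb x n \<theta>0) \<le> norm a * 1" by (intro mult_left_mono) auto
    finally show ?thesis by simp
  qed
  have uh: "\<bar>u i\<bar> \<le> 1/2" for i using ub[of i] na2 rs by linarith
  have su: "(\<Sum>i<n. u i) = 0"
  proof -
    have "(\<Sum>i<n. u i) = inner a (\<Sum>i<n. phi \<theta>0 (x i) - Zb x n \<theta>0)"
      unfolding u_def by (simp add: inner_sum_right)
    also have "(\<Sum>i<n. phi \<theta>0 (x i) - Zb x n \<theta>0) = 0"
      unfolding sum_subtractf sum_constant_scaleR Zb_def using n by simp
    finally show ?thesis by simp
  qed
  have wsum: "(\<Sum>i<n. ((1 + u i) / real n) *\<^sub>R x i) = th"
  proof -
    have "(\<Sum>i<n. ((1 + u i) / real n) *\<^sub>R x i) = (1 / real n) *\<^sub>R (\<Sum>i<n. x i) + (1 / real n) *\<^sub>R (\<Sum>i<n. u i *\<^sub>R x i)"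
      by (simp add: scaleR_sum_right scaleR_add_left sum.distrib add_divide_distrib)
    also have "(\<Sum>i<n. u i *\<^sub>R x i) = (\<Sum>i<n. u i *\<^sub>R (x i - \<theta>0)) + (\<Sum>i<n. u i) *\<^sub>R \<theta>0"
      by (simp add: scaleR_diff_right sum_subtractf scaleR_sum_left)
    also have "\<dots> = (\<Sum>i<n. u i *\<^sub>R (x i - \<theta>0))" using su by simp
    also have "(1 / real n) *\<^sub>R (\<Sum>i<n. u i *\<^sub>R (x i - \<theta>0)) = th - s"
      using a unfolding Lmap_def u_def by simp
    finally show ?thesis unfolding s_def smean_def by simp
  qed
  have lb: "ELL x n th \<le> 4 * (\<Sum>i<n. (u i)\<^sup>2)" by (rule ELL_upper[OF n uh su wsum])
  also have "(\<Sum>i<n. (u i)\<^sup>2) \<le> (\<Sum>i<n. (2 * r / c)\<^sup>2)"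
  proof (rule sum_mono)
    fix i
    have "\<bar>u i\<bar> \<le> 2 * r / c" using ub[of i] na2 by linarith
    then have "\<bar>u i\<bar>\<^sup>2 \<le> (2 * r / c)\<^sup>2" by (intro power_mono) auto
    then show "(u i)\<^sup>2 \<le> (2 * r / c)\<^sup>2" by simp
  qed
  finally have lb2: "ELL x n th \<le> 4 * (real n * (2 * r / c)\<^sup>2)" by simp
  have l0: "0 \<le> ELL x n th" by (rule ELL_nonneg[OF n thT])
  have "norm (th - \<theta>0) \<le> (4 * (real n * (2 * r / c)\<^sup>2)) / (2 * real n) * r"
  proof -
    have "ELL x n th / (2 * real n) \<le> (4 * (real n * (2 * r / c)\<^sup>2)) / (2 * real n)"
      using lb2 n by (intro divide_right_mono) auto
    moreover have "0 \<le> ELL x n th / (2 * real n)" using l0 by simp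
    ultimately show ?thesis unfolding eqn using ths by (intro mult_mono) auto
  qed
  also have "\<dots> = 8 * r ^ 3 / c\<^sup>2" using n c by (simp add: field_simps power2_eq_square power3_eq_cube)
  finally show ?thesis unfolding th_def .
qed



lemma (in prob_space) wlln:
  fixes X :: "'a \<Rightarrow> 'b::topological_space" and Xs :: "nat \<Rightarrow> 'a \<Rightarrow> 'b" and f :: "'b \<Rightarrow> real"
  assumes Xm[measurable]: "X \<in> borel_measurable M"
    and Xsm[measurable]: "\<And>i. Xs i \<in> borel_measurable M"
    and ind: "indep_vars (\<lambda>_. borel) Xs UNIV"
    and dist: "\<And>i. distr M borel (Xs i) = distr M borel X"
    and fm[measurable]: "f \<in> borel_measurable borel"
    and sq: "integrable M (\<lambda>\<omega>. (f (X \<omega>))\<^sup>2)"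
    and t: "0 < t" and n: "0 < n"
  shows "prob {\<omega> \<in> space M. t \<le> \<bar>(1 / real n) * (\<Sum>i<n. f (Xs i \<omega>)) - expectation (\<lambda>\<omega>. f (X \<omega>))\<bar>}
     \<le> expectation (\<lambda>\<omega>. (f (X \<omega>) - expectation (\<lambda>\<omega>. f (X \<omega>)))\<^sup>2) / (real n * t\<^sup>2)"
proof -
  define \<mu> where "\<mu> = expectation (\<lambda>\<omega>. f (X \<omega>))"
  define \<sigma> where "\<sigma> = expectation (\<lambda>\<omega>. (f (X \<omega>) - \<mu>)\<^sup>2)"
  have tr_int: "expectation (\<lambda>\<omega>. h (Xs i \<omega>)) = expectation (\<lambda>\<omega>. h (X \<omega>))"
    if hm: "h \<in> borel_measurable borel" for h :: "'b \<Rightarrow> real" and i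
    using integral_distr[OF Xsm[of i] hm] integral_distr[OF Xm hm] dist[of i] by simp
  have tr_intg: "integrable M (\<lambda>\<omega>. h (Xs i \<omega>)) \<longleftrightarrow> integrable M (\<lambda>\<omega>. h (X \<omega>))"
    if hm: "h \<in> borel_measurable borel" for h :: "'b \<Rightarrow> real" and i
    using integrable_distr_eq[OF Xsm[of i] hm] integrable_distr_eq[OF Xm hm] dist[of i] by simp
  have intf: "integrable M (\<lambda>\<omega>. f (X \<omega>))"
    using square_integrable_imp_integrable[OF _ sq] by simp
  define V where "V i \<omega> = f (Xs i \<omega>) - \<mu>" for i \<omega>
  have Vm[measurable]: "V i \<in> borel_measurable M" for i unfolding V_def by measurable
  have gm: "(\<lambda>v. f v - \<mu>) \<in> borel_measurable borel" by measurable
  have g2m: "(\<lambda>v. (f v - \<mu>)\<^sup>2) \<in> borel_measurable borel" by measurable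
  have intX2: "integrable M (\<lambda>\<omega>. (f (X \<omega>) - \<mu>)\<^sup>2)"
    using sq intf by (simp add: power2_diff)
  have intV: "integrable M (V i)" for i
    unfolding V_def using tr_intg[OF gm, of i] intf by simp
  have EV: "expectation (V i) = 0" for i
  proof -
    have "expectation (V i) = expectation (\<lambda>\<omega>. f (X \<omega>) - \<mu>)" unfolding V_def by (rule tr_int[OF gm])
    also have "\<dots> = 0" using intf prob_space by (simp add: \<mu>_def)
    finally show ?thesis .
  qed
  have intV2: "integrable M (\<lambda>\<omega>. (V i \<omega>)\<^sup>2)" for i
    unfolding V_def using tr_intg[OF g2m, of i] intX2 by simp
  have EV2: "expectation (\<lambda>\<omega>. (V i \<omega>)\<^sup>2) = \<sigma>" for i
    unfolding V_def \<sigma>_def by (rule tr_int[OF g2m])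
  have indV: "indep_vars (\<lambda>_. borel) V UNIV"
    unfolding V_def using indep_vars_compose2[OF ind, of "\<lambda>i v. f v - \<mu>" "\<lambda>_. borel"] by simp
  have indep2: "indep_var borel (V i) borel (V j)" if "i \<noteq> j" for i j
  proof -
    have "indep_vars (\<lambda>_. borel) V (insert i {j})" by (rule indep_vars_subset[OF indV]) auto
    then have "indep_var borel (V i) borel (\<lambda>\<omega>. \<Sum>i\<in>{j}. V i \<omega>)"
      using indep_vars_sum[of "{j}" i V] that by auto
    then show ?thesis by simp
  qed
  have EVV: "expectation (\<lambda>\<omega>. V i \<omega> * V j \<omega>) = (if i = j then \<sigma> else 0)" for i j
  proof (cases "i = j")
    case True then show ?thesis using EV2[of i] by (simp add: power2_eq_square)
  next
    case False
    show ?thesis using indep_var_lebesgue_integral[OF indep2[OF False] intV intV] EV False by simp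
  qed
  have intVV: "integrable M (\<lambda>\<omega>. V i \<omega> * V j \<omega>)" for i j
  proof (cases "i = j")
    case True then show ?thesis using intV2[of i] by (simp add: power2_eq_square)
  next
    case False
    show ?thesis using indep_var_integrable[OF indep2[OF False] intV intV] .
  qed
  define S where "S \<omega> = (\<Sum>i<n. V i \<omega>)" for \<omega>
  have S2: "(S \<omega>)\<^sup>2 = (\<Sum>i<n. \<Sum>j<n. V i \<omega> * V j \<omega>)" for \<omega>
    unfolding S_def power2_eq_square by (simp add: sum_product)
  have intS2: "integrable M (\<lambda>\<omega>. (S \<omega>)\<^sup>2)" unfolding S2 using intVV by auto
  have ES2: "expectation (\<lambda>\<omega>. (S \<omega>)\<^sup>2) = real n * \<sigma>"
  proof -
    have "expectation (\<lambda>\<omega>. (S \<omega>)\<^sup>2) = (\<Sum>i<n. \<Sum>j<n. expectation (\<lambda>\<omega>. V i \<omega> * V j \<omega>))"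
      unfolding S2 using intVV by (simp add: Bochner_Integration.integral_sum)
    also have "\<dots> = (\<Sum>i<n. \<Sum>j<n. if i = j then \<sigma> else 0)" unfolding EVV ..
    also have "\<dots> = real n * \<sigma>" by simp
    finally show ?thesis .
  qed
  have setq: "{\<omega> \<in> space M. t \<le> \<bar>(1 / real n) * (\<Sum>i<n. f (Xs i \<omega>)) - \<mu>\<bar>}
      = {\<omega> \<in> space M. (real n * t)\<^sup>2 \<le> (S \<omega>)\<^sup>2}"
  proof -
    have eq: "(1 / real n) * (\<Sum>i<n. f (Xs i \<omega>)) - \<mu> = S \<omega> / real n" for \<omega>
      unfolding S_def V_def using n by (simp add: sum_subtractf field_simps)
    have "t \<le> \<bar>S \<omega> / real n\<bar> \<longleftrightarrow> (real n * t)\<^sup>2 \<le> (S \<omega>)\<^sup>2" for \<omega>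
    proof -
      have "t \<le> \<bar>S \<omega> / real n\<bar> \<longleftrightarrow> real n * t \<le> \<bar>S \<omega>\<bar>" using n by (simp add: field_simps)
      also have "\<dots> \<longleftrightarrow> (real n * t)\<^sup>2 \<le> \<bar>S \<omega>\<bar>\<^sup>2"
        using power_mono_iff[of "real n * t" "\<bar>S \<omega>\<bar>" 2] n t by simp
      finally show ?thesis by simp
    qed
    then show ?thesis unfolding eq by simp
  qed
  have "prob {\<omega> \<in> space M. (real n * t)\<^sup>2 \<le> (S \<omega>)\<^sup>2} \<le> expectation (\<lambda>\<omega>. (S \<omega>)\<^sup>2) / (real n * t)\<^sup>2"
    by (rule integral_Markov_inequality_measure[OF intS2]) (use n t in auto)
  also have "\<dots> = \<sigma> / (real n * t\<^sup>2)" unfolding ES2 using n t by (simp add: power2_eq_square field_simps)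
  finally show ?thesis unfolding \<mu>_def[symmetric] \<sigma>_def[symmetric] setq .
qed



lemma vec_nth_meas[measurable]:
  "f \<in> borel_measurable M \<Longrightarrow> (\<lambda>x. (f x :: real^'n) $ i) \<in> borel_measurable M"
  by (rule measurable_compose[OF _ borel_measurable_nth])

lemma phi_cont: "continuous_on UNIV (phi \<theta>0)"
  unfolding phi_def by (intro continuous_intros) (auto, smt (verit) zero_le_power2)

lemma phi_meas[measurable]: "phi \<theta>0 \<in> borel_measurable borel"
  by (rule borel_measurable_continuous_onI[OF phi_cont])

lemma phi_comp_bound: "\<bar>(v - \<theta>0) $ k * (phi \<theta>0 v) $ j\<bar> \<le> 1"
proof -
  define r where "r = norm (v - \<theta>0)"
  have "\<bar>(v - \<theta>0) $ k * (phi \<theta>0 v) $ j\<bar> \<le> r * norm (phi \<theta>0 v)"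
    unfolding abs_mult r_def by (intro mult_mono component_le_norm_cart) auto
  also have "norm (phi \<theta>0 v) = r / (1 + r\<^sup>2)" unfolding phi_def r_def by (simp add: add_pos_nonneg)
  also have "r * (r / (1 + r\<^sup>2)) \<le> 1" by (simp add: field_simps add_pos_nonneg power2_eq_square)
  finally show ?thesis .
qed

lemma (in prob_space) A_inj:
  fixes X :: "'a \<Rightarrow> real^'d" and \<theta>0 :: "real^'d" and \<Sigma>0 :: "real^'d^'d"
  assumes Xm[measurable]: "X \<in> borel_measurable M"
    and sq: "integrable M (\<lambda>\<omega>. (norm (X \<omega>))\<^sup>2)"
    and S: "\<Sigma>0 = (\<chi> i j. integral\<^sup>L M (\<lambda>\<omega>. (X \<omega> $ i - \<theta>0 $ i) * (X \<omega> $ j - \<theta>0 $ j)))"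
    and rk: "rank \<Sigma>0 = CARD('d)"
  shows "inj ((*v) (\<chi> k j. expectation (\<lambda>\<omega>. (X \<omega> - \<theta>0) $ k * (phi \<theta>0 (X \<omega>)) $ j)))"
proof -
  define A :: "real^'d^'d" where "A = (\<chi> k j. expectation (\<lambda>\<omega>. (X \<omega> - \<theta>0) $ k * (phi \<theta>0 (X \<omega>)) $ j))"
  define Y where "Y \<omega> = X \<omega> - \<theta>0" for \<omega>
  have Ym[measurable]: "Y \<in> borel_measurable M" unfolding Y_def by measurable
  have intKJ: "integrable M (\<lambda>\<omega>. (X \<omega> - \<theta>0) $ k * (phi \<theta>0 (X \<omega>)) $ j)" for k j
  proof (rule integrable_const_bound[where B=1])
    show "AE \<omega> in M. norm ((X \<omega> - \<theta>0) $ k * (phi \<theta>0 (X \<omega>)) $ j) \<le> 1"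
      by (rule AE_I2) (simp only: real_norm_def phi_comp_bound)
    show "(\<lambda>\<omega>. (X \<omega> - \<theta>0) $ k * (phi \<theta>0 (X \<omega>)) $ j) \<in> borel_measurable M" by measurable
  qed
  have intYY: "integrable M (\<lambda>\<omega>. Y \<omega> $ i * Y \<omega> $ j)" for i j
  proof (rule Bochner_Integration.integrable_bound)
    show "integrable M (\<lambda>\<omega>. 2 * (norm (X \<omega>))\<^sup>2 + 2 * (norm \<theta>0)\<^sup>2)" using sq by simp
    show "(\<lambda>\<omega>. Y \<omega> $ i * Y \<omega> $ j) \<in> borel_measurable M" by measurable
    show "AE \<omega> in M. norm (Y \<omega> $ i * Y \<omega> $ j) \<le> norm (2 * (norm (X \<omega>))\<^sup>2 + 2 * (norm \<theta>0)\<^sup>2)"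
    proof (rule AE_I2)
      fix \<omega>
      have "norm (Y \<omega> $ i * Y \<omega> $ j) \<le> norm (Y \<omega>) * norm (Y \<omega>)"
        unfolding real_norm_def abs_mult by (intro mult_mono component_le_norm_cart) auto
      also have "norm (Y \<omega>) \<le> norm (X \<omega>) + norm \<theta>0" unfolding Y_def by (rule norm_triangle_ineq4)
      then have "norm (Y \<omega>) * norm (Y \<omega>) \<le> (norm (X \<omega>) + norm \<theta>0) * (norm (X \<omega>) + norm \<theta>0)"
        by (intro mult_mono) auto
      also have "\<dots> \<le> 2 * (norm (X \<omega>))\<^sup>2 + 2 * (norm \<theta>0)\<^sup>2"
      proof -
        have e: "(norm (X \<omega>) + norm \<theta>0) * (norm (X \<omega>) + norm \<theta>0)
            = 2 * (norm (X \<omega>))\<^sup>2 + 2 * (norm \<theta>0)\<^sup>2 - (norm (X \<omega>) - norm \<theta>0)\<^sup>2"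
          by (simp add: power2_eq_square algebra_simps)
        have "0 \<le> (norm (X \<omega>) - norm \<theta>0)\<^sup>2" by simp
        then show ?thesis unfolding e by linarith
      qed
      finally show "norm (Y \<omega> $ i * Y \<omega> $ j) \<le> norm (2 * (norm (X \<omega>))\<^sup>2 + 2 * (norm \<theta>0)\<^sup>2)" by simp
    qed
  qed
  have "a = 0" if Aa: "A *v a = 0" for a
  proof -
    define q where "q \<omega> = inner a (Y \<omega>)" for \<omega>
    have qm[measurable]: "q \<in> borel_measurable M" unfolding q_def by measurable
    define g where "g \<omega> = (q \<omega>)\<^sup>2 / (1 + (norm (Y \<omega>))\<^sup>2)" for \<omega>
    have gexp: "g \<omega> = (\<Sum>k\<in>UNIV. \<Sum>j\<in>UNIV. a $ k * a $ j * ((X \<omega> - \<theta>0) $ k * (phi \<theta>0 (X \<omega>)) $ j))" for \<omega>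
    proof -
      have "g \<omega> = q \<omega> * inner a (phi \<theta>0 (X \<omega>))"
        unfolding g_def q_def phi_def Y_def by (simp add: power2_eq_square)
      also have "\<dots> = (\<Sum>k\<in>UNIV. a $ k * Y \<omega> $ k) * (\<Sum>j\<in>UNIV. a $ j * (phi \<theta>0 (X \<omega>)) $ j)"
        unfolding q_def inner_vec_def inner_real_def ..
      also have "\<dots> = (\<Sum>k\<in>UNIV. \<Sum>j\<in>UNIV. a $ k * a $ j * ((X \<omega> - \<theta>0) $ k * (phi \<theta>0 (X \<omega>)) $ j))"
        unfolding sum_product Y_def by (simp add: mult_ac)
      finally show ?thesis .
    qed
    have intg: "integrable M g" unfolding gexp using intKJ by auto
    have "expectation g = (\<Sum>k\<in>UNIV. \<Sum>j\<in>UNIV. a $ k * a $ j * A $ k $ j)"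
      unfolding gexp A_def using intKJ by (simp add: Bochner_Integration.integral_sum)
    also have "\<dots> = inner a (A *v a)"
      unfolding inner_vec_def inner_real_def matrix_vector_mult_def by (simp add: sum_distrib_left mult_ac)
    also have "\<dots> = 0" using Aa by simp
    finally have Eg: "expectation g = 0" .
    have gnn: "0 \<le> g \<omega>" for \<omega> unfolding g_def by (simp add: add_pos_nonneg)
    have "AE \<omega> in M. g \<omega> = 0"
      using integral_nonneg_eq_0_iff_AE[OF intg] gnn Eg by simp
    have pos1: "0 < 1 + (norm (Y \<omega>))\<^sup>2" for \<omega> by (simp add: add_pos_nonneg)
    have gq: "g \<omega> = 0 \<Longrightarrow> q \<omega> = 0" for \<omega> using pos1[of \<omega>] unfolding g_def by simp
    then have AEq: "AE \<omega> in M. q \<omega> = 0"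
      using \<open>AE \<omega> in M. g \<omega> = 0\<close> by (auto elim: AE_mp)
    have "(\<Sigma>0 *v a) $ i = 0" for i
    proof -
      have "(\<Sigma>0 *v a) $ i = (\<Sum>j\<in>UNIV. expectation (\<lambda>\<omega>. Y \<omega> $ i * Y \<omega> $ j) * a $ j)"
        unfolding S matrix_vector_mult_def Y_def by simp
      also have "\<dots> = expectation (\<lambda>\<omega>. Y \<omega> $ i * q \<omega>)"
        unfolding q_def inner_vec_def inner_real_def using intYY
        by (simp add: Bochner_Integration.integral_sum sum_distrib_left mult_ac)
      also have "\<dots> = expectation (\<lambda>\<omega>. 0)"
        by (rule integral_cong_AE) (use AEq in auto)
      finally show ?thesis by simp
    qed
    then have "\<Sigma>0 *v a = 0" by (simp add: vec_eq_iff)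
    moreover have "inj ((*v) \<Sigma>0)" using rk full_rank_injective[of \<Sigma>0] by simp
    ultimately show "a = 0" using injD[of "(*v) \<Sigma>0" a 0] by simp
  qed
  then show ?thesis unfolding A_def[symmetric] inj_on_def
  proof (intro ballI impI)
    fix u v assume "A *v u = A *v v"
    then have "A *v (u - v) = 0" by (simp add: matrix_vector_mult_diff_distrib)
    then have "u - v = 0" by (rule \<open>\<And>a. A *v a = 0 \<Longrightarrow> a = 0\<close>)
    then show "u = v" by simp
  qed
qed



lemma powr_m32: assumes "0 < n" shows "(D / sqrt (real n)) ^ 3 = D ^ 3 * real n powr (-3/2)"
proof -
  have "real n powr (3/2) = real n powr (1 + 1/2)" by simp
  also have "\<dots> = real n powr 1 * real n powr (1/2)" by (rule powr_add)
  also have "\<dots> = real n * sqrt (real n)" using assms by (simp add: powr_half_sqrt)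
  finally have a: "real n powr (3/2) = real n * sqrt (real n)" .
  have b: "(sqrt (real n)) ^ 3 = real n * sqrt (real n)"
    unfolding power3_eq_cube by simp
  have "(D / sqrt (real n)) ^ 3 = D ^ 3 / (sqrt (real n)) ^ 3" by (rule power_divide)
  also have "\<dots> = D ^ 3 / (real n powr (3/2))" unfolding a b ..
  also have "\<dots> = D ^ 3 * real n powr (-3/2)"
  proof -
    have e: "(-3/2::real) = - (3/2)" by simp
    show ?thesis unfolding e powr_minus by (simp add: field_simps)
  qed
  finally show ?thesis .
qed

lemma part_ii:
  fixes M :: "'a measure" and X :: "'a \<Rightarrow> real^'d" and Xs :: "nat \<Rightarrow> 'a \<Rightarrow> real^'d"
    and \<theta>0 :: "real^'d" and \<Sigma>0 :: "real^'d^'d"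
  assumes PS: "prob_space M"
    and Xm[measurable]: "X \<in> borel_measurable M"
    and Xsm[measurable]: "\<And>i. Xs i \<in> borel_measurable M"
    and ind: "prob_space.indep_vars M (\<lambda>_. borel) Xs UNIV"
    and dist: "\<And>i. distr M borel (Xs i) = distr M borel X"
    and sq: "integrable M (\<lambda>\<omega>. (norm (X \<omega>))\<^sup>2)"
    and th0: "\<theta>0 = integral\<^sup>L M X"
    and S0: "\<Sigma>0 = (\<chi> i j. integral\<^sup>L M (\<lambda>\<omega>. (X \<omega> $ i - \<theta>0 $ i) * (X \<omega> $ j - \<theta>0 $ j)))"
    and rk: "rank \<Sigma>0 = CARD('d)"
    and AEi: "\<And>n. n > CARD('d) \<Longrightarrow>
           AE \<omega> in M. interior (convex hull ((\<lambda>i. Xs i \<omega>) ` {..<n})) \<noteq> {}"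
    and \<epsilon>: "0 < \<epsilon>"
  shows "\<exists>K. \<exists>N. \<forall>n\<ge>N. \<exists>A\<in>sets M. measure M A \<ge> 1 - \<epsilon> \<and>
            (\<forall>\<omega>\<in>A. norm (hC_inv (\<lambda>i. Xs i \<omega>) n \<theta>0 - \<theta>0) \<le> K * real n powr (-3/2))"
proof -
  interpret prob_space M by (rule PS)
  define Am :: "real^'d^'d" where "Am = (\<chi> k j. expectation (\<lambda>\<omega>. (X \<omega> - \<theta>0) $ k * (phi \<theta>0 (X \<omega>)) $ j))"
  have injA: "inj ((*v) Am)" using A_inj[OF Xm sq S0 rk] unfolding Am_def .
  obtain c where c: "0 < c" "\<And>a. c * norm a \<le> norm (Am *v a)"
    using linear_inj_bounded_below_pos[OF matrix_vector_mul_linear injA] by blast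
  define d where "d = real CARD('d)"
  have d1: "1 \<le> d" unfolding d_def by simp
  have intX: "integrable M X"
  proof (rule Bochner_Integration.integrable_bound)
    show "integrable M (\<lambda>\<omega>. 1 + (norm (X \<omega>))\<^sup>2)" using sq by simp
    show "X \<in> borel_measurable M" by measurable
    show "AE \<omega> in M. norm (X \<omega>) \<le> norm (1 + (norm (X \<omega>))\<^sup>2)"
    proof (rule AE_I2)
      fix \<omega>
      have "norm (X \<omega>) \<le> 1 + (norm (X \<omega>))\<^sup>2"
      proof (cases "norm (X \<omega>) \<le> 1")
        case True then show ?thesis by (smt (verit) zero_le_power2)
      next
        case False
        then have "norm (X \<omega>) * 1 \<le> norm (X \<omega>) * norm (X \<omega>)" by (intro mult_left_mono) auto
        then show ?thesis by (simp add: power2_eq_square)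
      qed
      then show "norm (X \<omega>) \<le> norm (1 + (norm (X \<omega>))\<^sup>2)" by simp
    qed
  qed
  have EXk: "expectation (\<lambda>\<omega>. X \<omega> $ k) = \<theta>0 $ k" for k
    using integral_bounded_linear[OF bounded_linear_vec_nth intX, of k] th0 by simp
  have sqk: "integrable M (\<lambda>\<omega>. (X \<omega> $ k)\<^sup>2)" for k
  proof (rule Bochner_Integration.integrable_bound[OF sq])
    show "(\<lambda>\<omega>. (X \<omega> $ k)\<^sup>2) \<in> borel_measurable M" by measurable
    show "AE \<omega> in M. norm ((X \<omega> $ k)\<^sup>2) \<le> norm ((norm (X \<omega>))\<^sup>2)"
    proof (rule AE_I2)
      fix \<omega>
      have "\<bar>X \<omega> $ k\<bar>\<^sup>2 \<le> (norm (X \<omega>))\<^sup>2" by (intro power_mono component_le_norm_cart) auto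
      then show "norm ((X \<omega> $ k)\<^sup>2) \<le> norm ((norm (X \<omega>))\<^sup>2)" by simp
    qed
  qed
  define fkj where "fkj k j v = (v - \<theta>0) $ k * (phi \<theta>0 v) $ j" for k j and v :: "real^'d"
  have fkjm[measurable]: "fkj k j \<in> borel_measurable borel" for k j unfolding fkj_def by measurable
  have sqkj: "integrable M (\<lambda>\<omega>. (fkj k j (X \<omega>))\<^sup>2)" for k j
  proof (rule integrable_const_bound[where B=1])
    show "AE \<omega> in M. norm ((fkj k j (X \<omega>))\<^sup>2) \<le> 1"
    proof (rule AE_I2)
      fix \<omega>
      have "\<bar>fkj k j (X \<omega>)\<bar> \<le> 1" unfolding fkj_def by (rule phi_comp_bound)
      then have "\<bar>fkj k j (X \<omega>)\<bar>\<^sup>2 \<le> 1\<^sup>2" by (intro power_mono) auto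
      then show "norm ((fkj k j (X \<omega>))\<^sup>2) \<le> 1" by simp
    qed
    show "(\<lambda>\<omega>. (fkj k j (X \<omega>))\<^sup>2) \<in> borel_measurable M" by measurable
  qed
  have EAm: "expectation (\<lambda>\<omega>. fkj k j (X \<omega>)) = Am $ k $ j" for k j unfolding Am_def fkj_def by simp
  define Vk where "Vk k = expectation (\<lambda>\<omega>. (X \<omega> $ k - \<theta>0 $ k)\<^sup>2)" for k
  have Vk0: "0 \<le> Vk k" for k unfolding Vk_def by simp
  define V where "V = (\<Sum>k\<in>UNIV. Vk k)"
  have V0: "0 \<le> V" unfolding V_def using Vk0 by (simp add: sum_nonneg)
  define Wkj where "Wkj k j = expectation (\<lambda>\<omega>. (fkj k j (X \<omega>) - Am $ k $ j)\<^sup>2)" for k j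
  have Wkj0: "0 \<le> Wkj k j" for k j unfolding Wkj_def by simp
  define W where "W = (\<Sum>k\<in>UNIV. \<Sum>j\<in>UNIV. Wkj k j)"
  have W0: "0 \<le> W" unfolding W_def using Wkj0 by (simp add: sum_nonneg)
  define \<eta> where "\<eta> = c / (4 * d\<^sup>2)"
  have \<eta>: "0 < \<eta>" unfolding \<eta>_def using c d1 by simp
  define D where "D = sqrt (2 * d\<^sup>2 * V / \<epsilon>) + 1"
  have arg0: "0 \<le> 2 * d\<^sup>2 * V / \<epsilon>" using V0 \<epsilon> by (intro divide_nonneg_pos mult_nonneg_nonneg) auto
  have D1: "1 \<le> D" unfolding D_def using arg0 by simp
  have D2: "2 * d\<^sup>2 * V / \<epsilon> \<le> D\<^sup>2"
  proof -
    have "sqrt (2 * d\<^sup>2 * V / \<epsilon>) \<le> D" unfolding D_def by simp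
    then have "(sqrt (2 * d\<^sup>2 * V / \<epsilon>))\<^sup>2 \<le> D\<^sup>2" using arg0 by (intro power_mono) auto
    then show ?thesis using arg0 by simp
  qed
  define K where "K = 8 * D ^ 3 / c\<^sup>2"
  define N1 where "N1 = nat \<lceil>2 * W / (\<epsilon> * \<eta>\<^sup>2)\<rceil> + 1"
  define N2 where "N2 = nat \<lceil>(4 * d * D / c)\<^sup>2\<rceil> + 1"
  define N where "N = max (max N1 N2) (Suc CARD('d))"
  show ?thesis
  proof (intro exI[of _ K] exI[of _ N] allI impI)
    fix n assume nN: "N \<le> n"
    have n1: "CARD('d) < n" using nN unfolding N_def by simp
    have npos: "0 < n" using n1 by simp
    have nW: "2 * W / (\<epsilon> * \<eta>\<^sup>2) \<le> real n"
    proof -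
      have "2 * W / (\<epsilon> * \<eta>\<^sup>2) \<le> real (nat \<lceil>2 * W / (\<epsilon> * \<eta>\<^sup>2)\<rceil>)" by linarith
      also have "\<dots> \<le> real N1" unfolding N1_def by simp
      also have "\<dots> \<le> real n" using nN unfolding N_def by simp
      finally show ?thesis .
    qed
    have nD: "(4 * d * D / c)\<^sup>2 \<le> real n"
    proof -
      have "(4 * d * D / c)\<^sup>2 \<le> real (nat \<lceil>(4 * d * D / c)\<^sup>2\<rceil>)" by linarith
      also have "\<dots> \<le> real N2" unfolding N2_def by simp
      also have "\<dots> \<le> real n" using nN unfolding N_def by simp
      finally show ?thesis .
    qed
    have sqn: "4 * d * D / c \<le> sqrt (real n)"
      using real_sqrt_le_mono[OF nD] c d1 D1 by simp
    have sqpos: "0 < sqrt (real n)" using npos by simp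
    define t1 where "t1 = D / (d * sqrt (real n))"
    define r where "r = D / sqrt (real n)"
    have t1pos: "0 < t1" unfolding t1_def using D1 d1 sqpos by simp
    have r0: "0 \<le> r" unfolding r_def using D1 sqpos by simp
    have dt1: "d * t1 = r" unfolding t1_def r_def using d1 by simp
    have ndr: "d * r \<le> c / 4"
    proof -
      have "d * r = d * D / sqrt (real n)" unfolding r_def by simp
      also have "\<dots> \<le> d * D / (4 * d * D / c)"
      proof (rule divide_left_mono[OF sqn])
        show "0 \<le> d * D" using d1 D1 by simp
        have "0 < 4 * d * D / c" using c d1 D1 by simp
        then show "0 < sqrt (real n) * (4 * d * D / c)" using sqpos by (rule mult_pos_pos[rotated])
      qed
      also have "\<dots> = c / 4" using c d1 D1 by (simp add: field_simps)
      finally show ?thesis .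
    qed
    have nt1: "real n * t1\<^sup>2 = D\<^sup>2 / d\<^sup>2"
      unfolding t1_def using npos d1 by (simp add: power_divide power_mult_distrib)
    define Bad1 where "Bad1 k = {\<omega> \<in> space M. t1 \<le> \<bar>(1 / real n) * (\<Sum>i<n. Xs i \<omega> $ k) - expectation (\<lambda>\<omega>. X \<omega> $ k)\<bar>}" for k
    define Bad2 where "Bad2 k j = {\<omega> \<in> space M. \<eta> \<le> \<bar>(1 / real n) * (\<Sum>i<n. fkj k j (Xs i \<omega>)) - expectation (\<lambda>\<omega>. fkj k j (X \<omega>))\<bar>}" for k j
    have B1m: "Bad1 k \<in> sets M" for k unfolding Bad1_def by measurable
    have B2m: "Bad2 k j \<in> sets M" for k j unfolding Bad2_def by measurable
    have pB1: "prob (Bad1 k) \<le> Vk k * d\<^sup>2 / D\<^sup>2" for k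
    proof -
      have vm: "(\<lambda>v::real^'d. v $ k) \<in> borel_measurable borel" by measurable
      have "prob (Bad1 k) \<le> expectation (\<lambda>\<omega>. (X \<omega> $ k - expectation (\<lambda>\<omega>. X \<omega> $ k))\<^sup>2) / (real n * t1\<^sup>2)"
        unfolding Bad1_def by (rule wlln[OF Xm Xsm ind dist vm sqk t1pos npos])
      also have "\<dots> = Vk k * d\<^sup>2 / D\<^sup>2" unfolding EXk Vk_def nt1 using d1 D1 by simp
      finally show ?thesis .
    qed
    have pB2: "prob (Bad2 k j) \<le> Wkj k j / (real n * \<eta>\<^sup>2)" for k j
    proof -
      have "prob (Bad2 k j) \<le> expectation (\<lambda>\<omega>. (fkj k j (X \<omega>) - expectation (\<lambda>\<omega>. fkj k j (X \<omega>)))\<^sup>2) / (real n * \<eta>\<^sup>2)"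
        unfolding Bad2_def by (rule wlln[OF Xm Xsm ind dist fkjm sqkj \<eta> npos])
      also have "\<dots> = Wkj k j / (real n * \<eta>\<^sup>2)" unfolding EAm Wkj_def ..
      finally show ?thesis .
    qed
    have sum1: "(\<Sum>k\<in>UNIV. prob (Bad1 k)) \<le> \<epsilon> / 2"
    proof -
      have "(\<Sum>k\<in>UNIV. prob (Bad1 k)) \<le> (\<Sum>k\<in>UNIV. Vk k * d\<^sup>2 / D\<^sup>2)" by (intro sum_mono pB1)
      also have "\<dots> = V * d\<^sup>2 / D\<^sup>2" unfolding V_def by (simp add: sum_distrib_right sum_divide_distrib)
      also have "\<dots> \<le> \<epsilon> / 2"
      proof -
        have "V * d\<^sup>2 \<le> \<epsilon> / 2 * D\<^sup>2" using D2 \<epsilon> by (simp add: field_simps)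
        then show ?thesis using D1 by (simp add: field_simps)
      qed
      finally show ?thesis .
    qed
    have sum2: "(\<Sum>k\<in>UNIV. \<Sum>j\<in>UNIV. prob (Bad2 k j)) \<le> \<epsilon> / 2"
    proof -
      have "(\<Sum>k\<in>UNIV. \<Sum>j\<in>UNIV. prob (Bad2 k j)) \<le> (\<Sum>k\<in>UNIV. \<Sum>j\<in>UNIV. Wkj k j / (real n * \<eta>\<^sup>2))"
        by (intro sum_mono pB2)
      also have "\<dots> = W / (real n * \<eta>\<^sup>2)" unfolding W_def by (simp add: sum_divide_distrib)
      also have "\<dots> \<le> \<epsilon> / 2"
      proof -
        have "W \<le> \<epsilon> / 2 * (real n * \<eta>\<^sup>2)" using nW \<epsilon> \<eta> by (simp add: field_simps)
        then show ?thesis using npos \<eta> by (simp add: field_simps)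
      qed
      finally show ?thesis .
    qed
    obtain N0 where N0: "{\<omega> \<in> space M. \<not> interior (convex hull ((\<lambda>i. Xs i \<omega>) ` {..<n})) \<noteq> {}} \<subseteq> N0"
        "emeasure M N0 = 0" "N0 \<in> sets M"
      using AEi[OF n1] by (elim AE_E) auto
    define U where "U = (\<Union>k. Bad1 k) \<union> (\<Union>k. \<Union>j. Bad2 k j)"
    have Um: "U \<in> sets M" unfolding U_def using B1m B2m by auto
    define A where "A = space M - U - N0"
    have Am: "A \<in> sets M" unfolding A_def using Um N0(3) by auto
    have "prob U \<le> prob (\<Union>k. Bad1 k) + prob (\<Union>k. \<Union>j. Bad2 k j)" unfolding U_def by (rule measure_Un_le) (use B1m B2m in auto)
    also have "prob (\<Union>k. Bad1 k) \<le> (\<Sum>k\<in>UNIV. prob (Bad1 k))" by (rule measure_UNION_le) (use B1m in auto)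
    also have "prob (\<Union>k. \<Union>j. Bad2 k j) \<le> (\<Sum>k\<in>UNIV. prob (\<Union>j. Bad2 k j))" by (rule measure_UNION_le) (use B2m in auto)
    also have "(\<Sum>k\<in>UNIV. prob (\<Union>j. Bad2 k j)) \<le> (\<Sum>k\<in>UNIV. \<Sum>j\<in>UNIV. prob (Bad2 k j))"
      by (intro sum_mono measure_UNION_le) (use B2m in auto)
    finally have pU: "prob U \<le> \<epsilon>" using sum1 sum2 by linarith
    have "prob A = prob (space M - U)"
      unfolding A_def by (rule measure_Diff_null_set) (use Um N0 in \<open>auto intro: null_setsI\<close>)
    also have "\<dots> = 1 - prob U" by (rule prob_compl[OF Um])
    finally have pA: "1 - \<epsilon> \<le> prob A" using pU by simp
    show "\<exists>A\<in>sets M. 1 - \<epsilon> \<le> measure M A \<and>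
            (\<forall>\<omega>\<in>A. norm (hC_inv (\<lambda>i. Xs i \<omega>) n \<theta>0 - \<theta>0) \<le> K * real n powr (-3/2))"
    proof (intro bexI[OF _ Am] conjI ballI)
      show "1 - \<epsilon> \<le> measure M A" using pA .
      fix \<omega> assume \<omega>A: "\<omega> \<in> A"
      then have \<omega>s: "\<omega> \<in> space M" and \<omega>U: "\<omega> \<notin> U" and \<omega>N: "\<omega> \<notin> N0" unfolding A_def by auto
      have ne: "interior (convex hull ((\<lambda>i. Xs i \<omega>) ` {..<n})) \<noteq> {}" using N0(1) \<omega>s \<omega>N by auto
      have compk: "\<bar>(smean (\<lambda>i. Xs i \<omega>) n - \<theta>0) $ k\<bar> \<le> t1" for k
      proof -
        have "\<omega> \<notin> Bad1 k" using \<omega>U unfolding U_def by auto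
        then have "\<bar>(1 / real n) * (\<Sum>i<n. Xs i \<omega> $ k) - \<theta>0 $ k\<bar> < t1" using \<omega>s EXk[of k] unfolding Bad1_def by auto
        moreover have "(smean (\<lambda>i. Xs i \<omega>) n - \<theta>0) $ k = (1 / real n) * (\<Sum>i<n. Xs i \<omega> $ k) - \<theta>0 $ k"
          unfolding smean_def by (simp add: sum_component)
        ultimately show ?thesis by simp
      qed
      have sc: "norm (smean (\<lambda>i. Xs i \<omega>) n - \<theta>0) \<le> r"
      proof -
        have "norm (smean (\<lambda>i. Xs i \<omega>) n - \<theta>0) \<le> (\<Sum>k\<in>UNIV. \<bar>(smean (\<lambda>i. Xs i \<omega>) n - \<theta>0) $ k\<bar>)"
          by (rule norm_le_l1_cart)
        also have "\<dots> \<le> (\<Sum>k\<in>(UNIV::'d set). t1)" by (intro sum_mono compk)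
        also have "\<dots> = d * t1" unfolding d_def by simp
        finally show ?thesis using dt1 by simp
      qed
      have Bc: "\<bar>Bm (\<lambda>i. Xs i \<omega>) n \<theta>0 k j - Am $ k $ j\<bar> \<le> \<eta>" for k j
      proof -
        have "\<omega> \<notin> Bad2 k j" using \<omega>U unfolding U_def by auto
        then have "\<bar>(1 / real n) * (\<Sum>i<n. fkj k j (Xs i \<omega>)) - Am $ k $ j\<bar> < \<eta>"
          using \<omega>s EAm[of k j] unfolding Bad2_def by auto
        moreover have "Bm (\<lambda>i. Xs i \<omega>) n \<theta>0 k j = (1 / real n) * (\<Sum>i<n. fkj k j (Xs i \<omega>))"
          unfolding Bm_def fkj_def ..
        ultimately show ?thesis by simp
      qed
      have small: "real CARD('d) * (real CARD('d) * \<eta> + r) \<le> c / 2"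
      proof -
        have "d * (d * \<eta>) = c / 4" unfolding \<eta>_def using d1 by (simp add: power2_eq_square field_simps)
        then have "d * (d * \<eta> + r) \<le> c / 2" using ndr by (simp add: distrib_left)
        then show ?thesis unfolding d_def .
      qed
      have rs: "2 * r / c \<le> 1/2"
      proof -
        have "r \<le> d * r" using d1 r0 by (simp add: mult_le_cancel_right1)
        then have "r \<le> c / 4" using ndr by simp
        then show ?thesis using c by (simp add: field_simps)
      qed
      have "norm (hC_inv (\<lambda>i. Xs i \<omega>) n \<theta>0 - \<theta>0) \<le> 8 * r ^ 3 / c\<^sup>2"
        by (rule det_final[OF npos ne c(1) c(2) Bc sc small rs])
      also have "\<dots> = K * real n powr (-3/2)"
        unfolding K_def r_def powr_m32[OF npos] by simp
      finally show "norm (hC_inv (\<lambda>i. Xs i \<omega>) n \<theta>0 - \<theta>0) \<le> K * real n powr (-3/2)" .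
    qed
  qed
qed

theorem lemma2:
  fixes M :: "'a measure" and X :: "'a \<Rightarrow> real^'d" and Xs :: "nat \<Rightarrow> 'a \<Rightarrow> real^'d"
    and \<theta>0 :: "real^'d" and \<Sigma>0 :: "real^'d^'d"
  assumes "prob_space M"
    and "X \<in> borel_measurable M"
    and "\<And>i. Xs i \<in> borel_measurable M"
    and "prob_space.indep_vars M (\<lambda>_. borel) Xs UNIV"
    and "\<And>i. distr M borel (Xs i) = distr M borel X"
    and "integrable M (\<lambda>\<omega>. (norm (X \<omega>))\<^sup>2)"
    and "\<theta>0 = integral\<^sup>L M X"
    and "\<Sigma>0 = (\<chi> i j. integral\<^sup>L M (\<lambda>\<omega>. (X \<omega> $ i - \<theta>0 $ i) * (X \<omega> $ j - \<theta>0 $ j)))"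
    and "rank \<Sigma>0 = CARD('d)"
    and "\<And>n. n > CARD('d) \<Longrightarrow>
           AE \<omega> in M. interior (convex hull ((\<lambda>i. Xs i \<omega>) ` {..<n})) \<noteq> {}"
  shows "(\<forall>n > CARD('d). \<forall>\<omega>. interior (convex hull ((\<lambda>i. Xs i \<omega>) ` {..<n})) \<noteq> {} \<longrightarrow>
            hC_inv (\<lambda>i. Xs i \<omega>) n \<theta>0 \<in> closed_segment (smean (\<lambda>i. Xs i \<omega>) n) \<theta>0)
       \<and> (\<forall>\<epsilon>>0. \<exists>K. \<exists>N. \<forall>n\<ge>N. \<exists>A\<in>sets M. measure M A \<ge> 1 - \<epsilon> \<and>
            (\<forall>\<omega>\<in>A. norm (hC_inv (\<lambda>i. Xs i \<omega>) n \<theta>0 - \<theta>0) \<le> K * real n powr (-3/2)))"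
proof -
  interpret prob_space M by fact
  note Xm[measurable] = assms(2)
  note Xsm[measurable] = assms(3)
  note ind = assms(4)
  note dist = assms(5)
  note sq = assms(6)
  note th0 = assms(7)
  note S0 = assms(8)
  note rk = assms(9)
  note AEi = assms(10)
  show ?thesis
  proof (intro conjI allI impI)
    fix n :: nat and \<omega> assume "CARD('d) < n" "interior (convex hull ((\<lambda>i. Xs i \<omega>) ` {..<n})) \<noteq> {}"
    then show "hC_inv (\<lambda>i. Xs i \<omega>) n \<theta>0 \<in> closed_segment (smean (\<lambda>i. Xs i \<omega>) n) \<theta>0"
      using inv_facts(2)[of n "\<lambda>i. Xs i \<omega>" \<theta>0] by simp
  next
    fix \<epsilon> :: real assume \<epsilon>: "0 < \<epsilon>"
    show "\<exists>K. \<exists>N. \<forall>n\<ge>N. \<exists>A\<in>sets M. measure M A \<ge> 1 - \<epsilon> \<and>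
            (\<forall>\<omega>\<in>A. norm (hC_inv (\<lambda>i. Xs i \<omega>) n \<theta>0 - \<theta>0) \<le> K * real n powr (-3/2))"
      by (rule part_ii[OF assms \<epsilon>])
  qed
qed


end
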